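(* Consider either the orthonormal Chebyshev polynomials of the first kind, $p_0(x)=1/\sqrt{\pi}$, $p_n(\cos\theta)=\sqrt{2/\pi}\cos(n\theta)$ for $n\ge1$ (orthonormal on $[-1,1]$ with respect to $(1-x^2)^{-1/2}dx$), whose zeros are $\zeta_j^{(n)}=\cos\big(\frac{(2j-1)\pi}{2n}\big)$, $j=1,\dots,n$; or the orthonormal Chebyshev polynomials of the second kind, $p_n(\cos\theta)=\sqrt{2/\pi}\,\frac{\sin((n+1)\theta)}{\sin\theta}$, $n\ge0$ (orthonormal with respect to $(1-x^2)^{1/2}dx$), whose zeros are $\zeta_j^{(n)}=\cos\big(\frac{j\pi}{n+1}\big)$, $j=1,\dots,n$. For $n\in\mathbb{N}$ and $y\in(-1,1)$ let $\lambda_n(y)=\big(\sum_{i=0}^{n-1}p_i^2(y)\big)^{-1}$, $\Psi_{n,j}(y)=\lambda_n(y)p_{j-1}^2(y)$ ($j=1,\dots,n$), $\mathcal S(\bm\Psi_n(y))=-\sum_{j=1}^n\Psi_{n,j}(y)\log\Psi_{n,j}(y)$, and $\mathfrak S_{n,j}=\mathcal S(\bm\Psi_n(\zeta_j^{(n)}))$. Let $x=\cos\theta\in(-1,1)$, $\theta\in(0,\pi)$. (i) If $\theta/\pi\notin\mathbb{Q}$, then (for either family) there is a sequence of pairs $(n_m,j_m)$ with $n_m\to\infty$ and $1\le j_m\le n_m$ such that $$\lim_{m\to\infty}\zeta_{j_m}^{(n_m)}=x\quad\text{and}\quad\lim_{m\to\infty}\big(\mathfrak S_{n_m,j_m}-\mathcal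 S(\bm\Psi_{n_m}(x))\big)=0.$$ (ii) If $\theta/\pi=s/k$ with $s,k\in\mathbb{N}$, $s<k$, $\operatorname{GCD}(s,k)=1$, then the conclusion of (i) still holds if the polynomials are of the second kind, or if $k$ is even. However, for the Chebyshev polynomials of the first kind with $k$ odd, $$\limsup_{n\to\infty}\big(\mathfrak S_{n,j_n}-\mathcal S(\bm\Psi_n(x))\big)<0$$ for every sequence $\{j_n\}$ with $1\le j_n\le n$ (along any subsequence of $n$).
   Context: $\operatorname{GCD}$ denotes the greatest common divisor; $\mathcal S$ is the Shannon entropy of the discrete probability distribution $\bm\Psi_n(y)=(\Psi_{n,1}(y),\dots,\Psi_{n,n}(y))$. *)

theory Defs
  imports "HOL-Analysis.Analysis"
begin

datatype cheb_kind = First | Second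

fun cheb_p :: "cheb_kind \<Rightarrow> nat \<Rightarrow> real \<Rightarrow> real" where
  "cheb_p First 0 y = 1 / sqrt pi"
| "cheb_p First (Suc n) y = sqrt (2 / pi) * cos (real (Suc n) * arccos y)"
| "cheb_p Second n y = sqrt (2 / pi) * sin (real (n + 1) * arccos y) / sin (arccos y)"

fun cheb_zero :: "cheb_kind \<Rightarrow> nat \<Rightarrow> nat \<Rightarrow> real" where
  "cheb_zero First n j = cos (real (2 * j - 1) * pi / (2 * real n))"
| "cheb_zero Second n j = cos (real j * pi / (real n + 1))"

definition christoffel :: "cheb_kind \<Rightarrow> nat \<Rightarrow> real \<Rightarrow> real" where
  "christoffel c n y = 1 / (\<Sum>i<n. (cheb_p c i y)\<^sup>2)"

definition Psi :: "cheb_kind \<Rightarrow> nat \<Rightarrow> nat \<Rightarrow> real \<Rightarrow> real" where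
  "Psi c n j y = christoffel c n y * (cheb_p c (j - 1) y)\<^sup>2"

text \<open>Shannon entropy (natural log; 0 log 0 = 0 since ln 0 = 0 in Isabelle).\<close>
definition entropy :: "cheb_kind \<Rightarrow> nat \<Rightarrow> real \<Rightarrow> real" where
  "entropy c n y = - (\<Sum>j=1..n. Psi c n j y * ln (Psi c n j y))"

definition entropy_at_zero :: "cheb_kind \<Rightarrow> nat \<Rightarrow> nat \<Rightarrow> real" where
  "entropy_at_zero c n j = entropy c n (cheb_zero c n j)"

end

theory Submission
  imports Defs "HOL-Real_Asymp.Real_Asymp"
begin

lemma cos_lip: "\<bar>cos (a::real) - cos b\<bar> \<le> \<bar>a - b\<bar>"
proof -
  have "\<bar>cos a - cos b\<bar> = 2 * \<bar>sin ((a + b) / 2)\<bar> * \<bar>sin ((b - a) / 2)\<bar>"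
    by (simp add: cos_diff_cos abs_mult)
  also have "\<dots> \<le> 2 * 1 * \<bar>(b - a) / 2\<bar>"
    by (intro mult_mono abs_sin_x_le_abs_x) auto
  finally show ?thesis by simp
qed

lemma sin_step: "2 * sin (a/2) * cos (real n * a) = sin ((real (Suc n) - 1/2) * a) - sin ((real n - 1/2) * a)"
proof -
  have e1: "(real (Suc n) - 1/2) * a = real n * a + a/2" by (simp add: algebra_simps)
  have e2: "(real n - 1/2) * a = real n * a - a/2" by (simp add: algebra_simps)
  show ?thesis unfolding e1 e2 sin_add sin_diff by (simp add: algebra_simps)
qed

lemma dirichlet:
  assumes "sin (a/2) \<noteq> 0"
  shows "(\<Sum>i<n. cos (real i * a)) = (sin ((real n - 1/2) * a) + sin (a/2)) / (2 * sin (a/2))"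
proof (induction n)
  case 0
  have "(real 0 - 1/2) * a = - (a/2)" by simp
  then show ?case by (simp del: of_nat_0)
next
  case (Suc n)
  have "(\<Sum>i<Suc n. cos (real i * a)) = (sin ((real n - 1/2) * a) + sin (a/2)) / (2 * sin (a/2)) + cos (real n * a)"
    using Suc by simp
  also have "\<dots> = (sin ((real n - 1/2) * a) + sin (a/2) + 2 * sin (a/2) * cos (real n * a)) / (2 * sin (a/2))"
    using assms by (simp add: field_simps)
  also have "\<dots> = (sin ((real (Suc n) - 1/2) * a) + sin (a/2)) / (2 * sin (a/2))"
    unfolding sin_step by simp
  finally show ?case .
qed

lemma dirichlet_bound:
  assumes "sin (a/2) \<noteq> 0"
  shows "\<bar>\<Sum>i<n. cos (real i * a)\<bar> \<le> 1 / \<bar>sin (a/2)\<bar>"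
proof -
  have "\<bar>sin ((real n - 1/2) * a) + sin (a/2)\<bar> \<le> 2"
    using abs_sin_le_one[of "(real n - 1/2) * a"] abs_sin_le_one[of "a/2"] by linarith
  then have "\<bar>sin ((real n - 1/2) * a) + sin (a/2)\<bar> / \<bar>2 * sin (a/2)\<bar> \<le> 2 / \<bar>2 * sin (a/2)\<bar>"
    using assms by (intro divide_right_mono) auto
  then show ?thesis unfolding dirichlet[OF assms] using assms by (simp add: abs_mult)
qed

definition flog :: "real \<Rightarrow> real" where "flog x = x * ln x"
definition Hw :: "(nat \<Rightarrow> real) \<Rightarrow> nat \<Rightarrow> real" where
  "Hw w n = ln (\<Sum>i<n. w i) - (\<Sum>i<n. flog (w i)) / (\<Sum>i<n. w i)"

lemma entropy_scale:
  assumes p: "\<And>i. i < n \<Longrightarrow> (cheb_p c i y)\<^sup>2 = \<kappa> * w i" and k: "\<kappa> > 0"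
    and w: "\<And>i. i < n \<Longrightarrow> w i \<ge> 0" and W: "(\<Sum>i<n. w i) > 0"
  shows "entropy c n y = Hw w n"
proof -
  define W where "W = (\<Sum>i<n. w i)"
  have sp: "(\<Sum>i<n. (cheb_p c i y)\<^sup>2) = \<kappa> * W"
    unfolding W_def sum_distrib_left using p by (intro sum.cong) auto
  have Psi: "Psi c n (Suc i) y = w i / W" if "i < n" for i
    unfolding Psi_def christoffel_def sp using p[OF that] k W W_def by (simp add: field_simps)
  have set: "{1..n} = Suc ` {..<n}" by (simp add: image_Suc_lessThan)
  have "entropy c n y = - (\<Sum>i<n. Psi c n (Suc i) y * ln (Psi c n (Suc i) y))"
    unfolding entropy_def set by (subst sum.reindex) auto
  also have "\<dots> = - (\<Sum>i<n. w i / W * ln (w i / W))"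
    using Psi by (intro arg_cong[where f=uminus] sum.cong) auto
  also have "\<dots> = - (\<Sum>i<n. flog (w i) / W - ln W * (w i / W))"
  proof (intro arg_cong[where f=uminus] sum.cong refl)
    fix i assume i: "i \<in> {..<n}"
    show "w i / W * ln (w i / W) = flog (w i) / W - ln W * (w i / W)"
    proof (cases "w i = 0")
      case True then show ?thesis by (simp add: flog_def)
    next
      case False
      then have "w i > 0" using w i by force
      then show ?thesis using W W_def by (simp add: flog_def ln_div field_simps)
    qed
  qed
  also have "\<dots> = ln W - (\<Sum>i<n. flog (w i)) / W"
    using W W_def by (simp add: sum_subtractf sum_divide_distrib[symmetric] sum_distrib_left[symmetric])
  finally show ?thesis unfolding Hw_def W_def .
qed

definition wF :: "real \<Rightarrow> nat \<Rightarrow> real" where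
  "wF \<phi> i = (if i = 0 then 1 else 1 + cos (2 * real i * \<phi>))"
definition wS :: "real \<Rightarrow> nat \<Rightarrow> real" where
  "wS \<phi> i = 1 - cos (2 * real (Suc i) * \<phi>)"

lemma wF_range: "0 \<le> wF \<phi> i \<and> wF \<phi> i \<le> 2"
  unfolding wF_def using cos_ge_minus_one cos_le_one by (auto simp del: cos_ge_minus_one cos_le_one) (smt (verit) cos_ge_minus_one cos_le_one)+

lemma wS_range: "0 \<le> wS \<phi> i \<and> wS \<phi> i \<le> 2"
  unfolding wS_def by (smt (verit) cos_ge_minus_one cos_le_one)

lemma entF:
  assumes "0 < \<phi>" "\<phi> < pi" "n > 0"
  shows "entropy First n (cos \<phi>) = Hw (wF \<phi>) n"
proof (rule entropy_scale[where \<kappa> = "1/pi"])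
  have ac: "arccos (cos \<phi>) = \<phi>" using assms by (simp add: arccos_cos)
  fix i assume "i < n"
  show "(cheb_p First i (cos \<phi>))\<^sup>2 = 1 / pi * wF \<phi> i"
  proof (cases i)
    case 0 then show ?thesis by (simp add: wF_def power_divide)
  next
    case (Suc m)
    have "(cheb_p First i (cos \<phi>))\<^sup>2 = 2/pi * (cos (real i * \<phi>))\<^sup>2"
      using Suc ac by (simp add: power_mult_distrib)
    also have "\<dots> = 1/pi * (1 + cos (2 * (real i * \<phi>)))"
      unfolding cos_double_cos[of "real i * \<phi>"] by simp
    also have "\<dots> = 1/pi * wF \<phi> i" using Suc unfolding wF_def by (simp only: mult.assoc) simp
    finally show ?thesis .
  qed
next
  show "0 < 1/pi" by simp
next
  fix i show "0 \<le> wF \<phi> i" using wF_range by blast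
next
  have "(\<Sum>i<n. wF \<phi> i) \<ge> (\<Sum>i\<in>{0}. wF \<phi> i)"
    using assms(3) by (intro sum_mono2) (auto simp: wF_range)
  then show "(\<Sum>i<n. wF \<phi> i) > 0" by (simp add: wF_def)
qed

lemma entS:
  assumes "0 < \<phi>" "\<phi> < pi" "n > 0"
  shows "entropy Second n (cos \<phi>) = Hw (wS \<phi>) n"
proof (rule entropy_scale[where \<kappa> = "1/(pi * (sin \<phi>)\<^sup>2)"])
  have ac: "arccos (cos \<phi>) = \<phi>" using assms by (simp add: arccos_cos)
  have s: "sin \<phi> > 0" using assms sin_gt_zero by blast
  fix i assume "i < n"
  have "(sqrt (2 / pi))\<^sup>2 = 2 / pi" by simp
  then show "(cheb_p Second i (cos \<phi>))\<^sup>2 = 1 / (pi * (sin \<phi>)\<^sup>2) * wS \<phi> i"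
    using ac s cos_double_sin[of "real (Suc i) * \<phi>"]
    by (simp add: wS_def power_mult_distrib power_divide mult.assoc field_simps)
next
  have s: "sin \<phi> > 0" using assms sin_gt_zero by blast
  then show "0 < 1/(pi * (sin \<phi>)\<^sup>2)" by simp
next
  fix i show "0 \<le> wS \<phi> i" using wS_range by blast
next
  have s: "sin \<phi> > 0" using assms sin_gt_zero by blast
  have "(\<Sum>i<n. wS \<phi> i) \<ge> (\<Sum>i\<in>{0}. wS \<phi> i)"
    using assms(3) by (intro sum_mono2) (auto simp: wS_range)
  moreover have "wS \<phi> 0 = 2 * (sin \<phi>)\<^sup>2" unfolding wS_def using cos_double_sin[of \<phi>] by simp
  moreover have "(\<Sum>i\<in>{0}. wS \<phi> i) = wS \<phi> 0" by simp
  ultimately show "(\<Sum>i<n. wS \<phi> i) > 0" using s by (smt (verit) zero_less_power)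
qed

lemma flog_cont: "continuous_on {0..2} flog"
proof (rule continuous_on_eq_continuous_within[THEN iffD2], intro ballI)
  fix x :: real assume x: "x \<in> {0..2}"
  show "continuous (at x within {0..2}) flog"
  proof (cases "x = 0")
    case True
    have "((\<lambda>x::real. x * ln x) \<longlongrightarrow> 0) (at_right 0)" by real_asymp
    then have "(flog \<longlongrightarrow> flog 0) (at 0 within {0..2})"
      by (simp add: flog_def[abs_def] at_within_Icc_at_right)
    then show ?thesis using True continuous_within by blast
  next
    case False
    then have "x > 0" using x by auto
    then have "isCont flog x" unfolding flog_def by (intro continuous_intros) auto
    then show ?thesis using continuous_at_imp_continuous_within by blast
  qed
qed

lemma flog_unif:
  assumes "e > 0"
  obtains d where "d > 0" "\<And>x y. x \<in> {0..2} \<Longrightarrow> y \<in> {0..2} \<Longrightarrow> \<bar>x - y\<bar> < d \<Longrightarrow> \<bar>flog x - flog y\<bar> < e"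
proof -
  have "uniformly_continuous_on {0..2} flog"
    by (rule compact_uniformly_continuous[OF flog_cont]) auto
  then obtain d where "d > 0" "\<And>x y. x \<in> {0..2} \<Longrightarrow> y \<in> {0..2} \<Longrightarrow> dist y x < d \<Longrightarrow> dist (flog y) (flog x) < e"
    using assms unfolding uniformly_continuous_on_def by metis
  then show ?thesis using that by (metis dist_real_def abs_minus_commute)
qed

lemma flog_bound: assumes "0 \<le> x" "x \<le> 2" shows "\<bar>flog x\<bar> \<le> 2"
proof (cases "x = 0")
  case True then show ?thesis by (simp add: flog_def)
next
  case False
  then have x: "x > 0" using assms by auto
  have "ln x \<le> x - 1" using ln_le_minus_one x by blast
  moreover have "ln x \<ge> 1 - 1/x"
    using ln_le_minus_one[of "1/x"] x by (simp add: ln_div)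
  ultimately have 1: "x * ln x \<le> x * (x - 1)" and 2: "x * ln x \<ge> x * (1 - 1/x)"
    using x by (auto intro: mult_left_mono)
  have 3: "x * (x - 1) \<le> 2"
  proof (cases "x \<ge> 1")
    case True then show ?thesis using mult_mono[of x 2 "x-1" 1] assms by simp
  next
    case False then show ?thesis using mult_nonneg_nonpos[of x "x-1"] x by simp
  qed
  have 4: "x * (1 - 1/x) = x - 1" using x by (simp add: field_simps)
  show ?thesis using 1 2 3 4 x unfolding flog_def by linarith
qed

lemma ln_diff_bound:
  fixes A B m :: real
  assumes "A > 0" "B > 0" "A \<ge> m" "B \<ge> m" "m > 0"
  shows "\<bar>ln A - ln B\<bar> \<le> \<bar>A - B\<bar> / m"
proof -
  have 1: "ln A - ln B \<le> (A - B) / B"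
    using ln_le_minus_one[of "A/B"] assms by (simp add: ln_div field_simps)
  have 2: "ln B - ln A \<le> (B - A) / A"
    using ln_le_minus_one[of "B/A"] assms by (simp add: ln_div field_simps)
  have "(A - B) / B \<le> \<bar>A - B\<bar> / m" using assms
    by (smt (verit) divide_le_cancel frac_le abs_ge_zero)
  moreover have "(B - A) / A \<le> \<bar>A - B\<bar> / m" using assms
    by (smt (verit) divide_le_cancel frac_le abs_ge_zero)
  ultimately show ?thesis using 1 2 by linarith
qed

lemma Hw_close:
  assumes N: "N > 0"
    and ab: "\<And>i. i < N \<Longrightarrow> a i \<in> {0..2} \<and> b i \<in> {0..2} \<and> \<bar>a i - b i\<bar> \<le> \<delta>"
    and d: "\<delta> \<le> 1/4"
    and fe: "\<And>i. i < N \<Longrightarrow> \<bar>flog (a i) - flog (b i)\<bar> \<le> e"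
    and A: "(\<Sum>i<N. a i) \<ge> N / 2"
  shows "\<bar>Hw b N - Hw a N\<bar> \<le> 20 * \<delta> + 2 * e"
proof -
  define A where "A = (\<Sum>i<N. a i)"
  define B where "B = (\<Sum>i<N. b i)"
  define TA where "TA = (\<Sum>i<N. flog (a i))"
  define TB where "TB = (\<Sum>i<N. flog (b i))"
  have Nr: "real N > 0" using N by simp
  have AB: "\<bar>A - B\<bar> \<le> N * \<delta>"
  proof -
    have "\<bar>A - B\<bar> = \<bar>\<Sum>i<N. a i - b i\<bar>" unfolding A_def B_def by (simp add: sum_subtractf)
    also have "\<dots> \<le> (\<Sum>i<N. \<bar>a i - b i\<bar>)" by (rule sum_abs)
    also have "\<dots> \<le> (\<Sum>i<N. \<delta>)" using ab by (intro sum_mono) auto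
    finally show ?thesis by simp
  qed
  have dpos: "\<delta> \<ge> 0" using ab[of 0] N by auto
  have Ag: "A \<ge> N/2" using A A_def by simp
  have "N * \<delta> \<le> N * (1/4)" using d Nr by (intro mult_left_mono) auto
  then have Bg: "B \<ge> N/4" using AB Ag by linarith
  have Apos: "A > 0" "B > 0" using Ag Bg Nr by auto
  have lnb: "\<bar>ln A - ln B\<bar> \<le> 4 * \<delta>"
  proof -
    have "\<bar>ln A - ln B\<bar> \<le> \<bar>A - B\<bar> / (N/4)"
      by (rule ln_diff_bound) (use Apos Ag Bg Nr in auto)
    also have "\<dots> \<le> (N * \<delta>) / (N/4)" using AB Nr by (intro divide_right_mono) auto
    also have "\<dots> = 4 * \<delta>" using Nr by simp
    finally show ?thesis .
  qed
  have TAB: "\<bar>TA - TB\<bar> \<le> N * e"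
  proof -
    have "\<bar>TA - TB\<bar> = \<bar>\<Sum>i<N. flog (a i) - flog (b i)\<bar>" unfolding TA_def TB_def by (simp add: sum_subtractf)
    also have "\<dots> \<le> (\<Sum>i<N. \<bar>flog (a i) - flog (b i)\<bar>)" by (rule sum_abs)
    also have "\<dots> \<le> (\<Sum>i<N. e)" using fe by (intro sum_mono) auto
    finally show ?thesis by simp
  qed
  have TBb: "\<bar>TB\<bar> \<le> 2 * N"
  proof -
    have "\<bar>TB\<bar> \<le> (\<Sum>i<N. \<bar>flog (b i)\<bar>)" unfolding TB_def by (rule sum_abs)
    also have "\<dots> \<le> (\<Sum>i<N. 2)" using ab flog_bound by (intro sum_mono) auto
    finally show ?thesis by simp
  qed
  have eq: "TA / A - TB / B = (TA - TB) / A + TB * (B - A) / (A * B)"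
    using Apos by (simp add: field_simps)
  have q1: "\<bar>(TA - TB) / A\<bar> \<le> 2 * e"
  proof -
    have "\<bar>(TA - TB) / A\<bar> = \<bar>TA - TB\<bar> / A" using Apos by simp
    also have "\<dots> \<le> (N * e) / (N / 2)" using TAB Ag Nr Apos
      by (intro frac_le) auto
    also have "\<dots> = 2 * e" using Nr by simp
    finally show ?thesis .
  qed
  have q2: "\<bar>TB * (B - A) / (A * B)\<bar> \<le> 16 * \<delta>"
  proof -
    have "\<bar>TB * (B - A) / (A * B)\<bar> = \<bar>TB\<bar> * \<bar>A - B\<bar> / (A * B)" using Apos by (simp add: abs_mult abs_minus_commute)
    also have "\<dots> \<le> (2 * N) * (N * \<delta>) / ((N/2) * (N/4))"
      using TBb AB Ag Bg Nr Apos dpos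
      by (intro frac_le mult_mono) auto
    also have "\<dots> = 16 * \<delta>" using Nr by (simp add: field_simps)
    finally show ?thesis .
  qed
  have "Hw b N - Hw a N = (ln B - ln A) + (TA / A - TB / B)"
    unfolding Hw_def A_def B_def TA_def TB_def by simp
  then have h: "Hw b N - Hw a N = (ln B - ln A) + (TA - TB) / A + TB * (B - A) / (A * B)"
    using eq by simp
  have abs3: "\<bar>x + y + z\<bar> \<le> \<bar>x\<bar> + \<bar>y\<bar> + \<bar>z\<bar>" for x y z :: real by linarith
  have "\<bar>Hw b N - Hw a N\<bar> \<le> \<bar>ln B - ln A\<bar> + \<bar>(TA - TB) / A\<bar> + \<bar>TB * (B - A) / (A * B)\<bar>"
    unfolding h by (rule abs3)
  moreover have "\<bar>ln B - ln A\<bar> = \<bar>ln A - ln B\<bar>" by (rule abs_minus_commute)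
  ultimately show ?thesis using lnb q1 q2 by linarith
qed

lemma Hw_tendsto:
  assumes N: "\<And>m. N m > 0"
    and ab: "\<And>m i. i < N m \<Longrightarrow> a m i \<in> {0..2} \<and> b m i \<in> {0..2} \<and> \<bar>a m i - b m i\<bar> \<le> \<delta> m"
    and d: "\<delta> \<longlonglongrightarrow> 0"
    and A: "eventually (\<lambda>m. (\<Sum>i<N m. a m i) \<ge> N m / 2) sequentially"
  shows "(\<lambda>m. Hw (b m) (N m) - Hw (a m) (N m)) \<longlonglongrightarrow> 0"
proof (rule tendstoI)
  fix \<epsilon> :: real assume \<epsilon>: "\<epsilon> > 0"
  obtain d0 where d0: "d0 > 0" "\<And>x y. x \<in> {0..2} \<Longrightarrow> y \<in> {0..2} \<Longrightarrow> \<bar>x - y\<bar> < d0 \<Longrightarrow> \<bar>flog x - flog y\<bar> < \<epsilon>/4"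
    using flog_unif[of "\<epsilon>/4"] \<epsilon> by auto
  define r where "r = min d0 (min (1/4) (\<epsilon>/80))"
  have r: "r > 0" using d0 \<epsilon> by (simp add: r_def)
  have "eventually (\<lambda>m. dist (\<delta> m) 0 < r) sequentially" using tendstoD[OF d r] .
  with A show "eventually (\<lambda>m. dist (Hw (b m) (N m) - Hw (a m) (N m)) 0 < \<epsilon>) sequentially"
  proof eventually_elim
    case (elim m)
    have dm: "\<bar>\<delta> m\<bar> < r" using elim by simp
    have "\<bar>Hw (b m) (N m) - Hw (a m) (N m)\<bar> \<le> 20 * \<delta> m + 2 * (\<epsilon>/4)"
    proof (rule Hw_close[OF N ab])
      show "\<delta> m \<le> 1/4" using dm r_def by linarith
      fix i assume i: "i < N m"
      show "\<bar>flog (a m i) - flog (b m i)\<bar> \<le> \<epsilon>/4"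
        using d0(2)[of "a m i" "b m i"] ab[OF i] dm r_def by force
    next
      show "real (N m) / 2 \<le> (\<Sum>i<N m. a m i)" using elim by simp
    qed
    also have "\<dots> < \<epsilon>" using dm r_def by linarith
    finally show ?case by simp
  qed
qed

lemma dioph_int:
  fixes \<alpha> :: real
  assumes "\<alpha> \<notin> \<rat>" "\<epsilon> > 0"
  shows "\<exists>n::nat. n \<ge> M \<and> (\<exists>p::int. \<bar>real n * \<alpha> - p\<bar> < \<epsilon>)"
proof -
  have inf: "infinite (approx_set \<alpha>)" using assms rational_iff_finite_approx_set by blast
  obtain h k where hk: "(h, k) \<in> approx_set \<alpha>" "int M + \<lceil>1/\<epsilon>\<rceil> < k"
    using infinite_approx_set[OF inf, of "int M + \<lceil>1/\<epsilon>\<rceil>"] by blast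
  have k: "k > 0" "\<bar>\<alpha> - h / k\<bar> < 1 / (real_of_int k)\<^sup>2" using hk unfolding approx_set_def by auto
  have c0: "1/\<epsilon> \<ge> 0" using assms by (simp add: less_imp_le)
  have c: "1/\<epsilon> \<le> of_int \<lceil>1/\<epsilon>\<rceil>" by (rule le_of_int_ceiling)
  have "real_of_int (int M + \<lceil>1/\<epsilon>\<rceil>) < real_of_int k" using hk(2) by (simp only: of_int_less_iff)
  then have k1: "real M + of_int \<lceil>1/\<epsilon>\<rceil> < real_of_int k" by simp
  have kM: "k \<ge> int M" "real_of_int k > 1/\<epsilon>"
  proof -
    show "real_of_int k > 1/\<epsilon>" using k1 c of_nat_0_le_iff[of M] by linarith
    have "-1 < 1/\<epsilon>" using c0 by linarith
    then have "\<lceil>1/\<epsilon>\<rceil> \<ge> 0" by simp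
    then show "k \<ge> int M" using hk(2) by linarith
  qed
  have "k * \<alpha> - h = k * (\<alpha> - h / k)" using k by (simp add: field_simps)
  then have "\<bar>k * \<alpha> - h\<bar> = k * \<bar>\<alpha> - h / k\<bar>" using k by (simp add: abs_mult)
  also have "\<dots> < k * (1 / (real_of_int k)\<^sup>2)" using k by (intro mult_strict_left_mono) auto
  also have "\<dots> = 1 / k" by (simp add: power2_eq_square)
  also have "\<dots> < \<epsilon>"
  proof -
    have "1 < real_of_int k * \<epsilon>" using kM(2) assms pos_divide_less_eq[of \<epsilon> 1 "real_of_int k"] by simp
    then show ?thesis using k pos_divide_less_eq[of "real_of_int k" 1 \<epsilon>] by (simp add: mult.commute)
  qed
  finally have "\<bar>real (nat k) * \<alpha> - h\<bar> < \<epsilon>" using k by simp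
  moreover have "nat k \<ge> M" using kM by linarith
  ultimately show ?thesis by (intro exI[of _ "nat k"] conjI exI[of _ h])
qed

lemma dioph_half:
  fixes \<alpha> :: real
  assumes "\<alpha> \<notin> \<rat>" "\<epsilon> > 0"
  shows "\<exists>n::nat. n \<ge> M \<and> (\<exists>p::int. \<bar>real n * \<alpha> - p - 1/2\<bar> < \<epsilon>)"
proof -
  have e2: "\<epsilon>/2 > 0" using assms by simp
  obtain h k where hk: "k > 0" "\<bar>of_int k * \<alpha> - of_int h - 1/2\<bar> < \<epsilon>/2"
    using sequence_of_fractional_parts_is_dense[OF assms(1) e2, of "1/2"] by blast
  obtain n0 and p0 :: int where np: "n0 \<ge> M" "\<bar>real n0 * \<alpha> - p0\<bar> < \<epsilon>/2"
    using dioph_int[OF assms(1), of "\<epsilon>/2" M] assms by auto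
  have "real (nat k + n0) * \<alpha> - (h + p0) - 1/2 = (of_int k * \<alpha> - of_int h - 1/2) + (real n0 * \<alpha> - p0)"
    using hk by (simp add: algebra_simps)
  then have "\<bar>real (nat k + n0) * \<alpha> - (h + p0) - 1/2\<bar> < \<epsilon>"
    using hk(2) np(2) abs_triangle_ineq[of "of_int k * \<alpha> - of_int h - 1/2" "real n0 * \<alpha> - p0"] by linarith
  moreover have "nat k + n0 \<ge> M" using np by simp
  ultimately show ?thesis by (intro exI[of _ "nat k + n0"] conjI exI[of _ "h + p0"]) simp_all
qed

lemma sum_wF: "n > 0 \<Longrightarrow> (\<Sum>i<n. wF \<phi> i) = real n - 1 + (\<Sum>i<n. cos (real i * (2 * \<phi>)))"
proof -
  assume "n > 0"
  then obtain m where m: "n = Suc m" using gr0_implies_Suc by blast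
  have "(\<Sum>i<n. wF \<phi> i) = 1 + (\<Sum>i<m. 1 + cos (2 * real (Suc i) * \<phi>))"
    unfolding m sum.lessThan_Suc_shift by (simp add: wF_def)
  moreover have "(\<Sum>i<n. cos (real i * (2 * \<phi>))) = 1 + (\<Sum>i<m. cos (2 * real (Suc i) * \<phi>))"
    unfolding m sum.lessThan_Suc_shift by (simp add: algebra_simps)
  ultimately show ?thesis using m by (simp add: sum.distrib)
qed

lemma sum_wS: "(\<Sum>i<n. wS \<phi> i) = real n + 1 - (\<Sum>i<Suc n. cos (real i * (2 * \<phi>)))"
proof -
  have "(\<Sum>i<Suc n. cos (real i * (2 * \<phi>))) = 1 + (\<Sum>i<n. cos (2 * real (Suc i) * \<phi>))"
    unfolding sum.lessThan_Suc_shift by (simp add: algebra_simps)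
  then show ?thesis by (simp add: wS_def sum_subtractf)
qed

lemma sum_wF_ge: assumes "0 < \<theta>" "\<theta> < pi" "n > 0"
  shows "(\<Sum>i<n. wF \<theta> i) \<ge> real n - 1 - 1 / sin \<theta>"
proof -
  have s: "sin \<theta> > 0" using assms sin_gt_zero by blast
  have "\<bar>\<Sum>i<n. cos (real i * (2 * \<theta>))\<bar> \<le> 1 / \<bar>sin (2 * \<theta> / 2)\<bar>"
    by (rule dirichlet_bound) (use s in simp)
  then show ?thesis using sum_wF[OF assms(3)] s by simp
qed

lemma sum_wS_ge: assumes "0 < \<theta>" "\<theta> < pi"
  shows "(\<Sum>i<n. wS \<theta> i) \<ge> real n + 1 - 1 / sin \<theta>"
proof -
  have s: "sin \<theta> > 0" using assms sin_gt_zero by blast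
  have "\<bar>\<Sum>i<Suc n. cos (real i * (2 * \<theta>))\<bar> \<le> 1 / \<bar>sin (2 * \<theta> / 2)\<bar>"
    by (rule dirichlet_bound) (use s in simp)
  then show ?thesis using sum_wS[where n=n and \<phi>=\<theta>] s by simp
qed

lemma ev_sum_half:
  assumes "\<And>n. n > 0 \<Longrightarrow> S n \<ge> real n - C" and "\<And>m. nm m \<ge> Suc m"
  shows "eventually (\<lambda>m. S (nm m) \<ge> real (nm m) / 2) sequentially"
proof -
  obtain M0 :: nat where M0: "real M0 \<ge> 2 * C" using real_arch_simple by blast
  show ?thesis using eventually_ge_at_top[of M0]
  proof eventually_elim
    case (elim m)
    have "real (nm m) \<ge> real M0" using elim assms(2)[of m] by simp
    then show ?case using assms(1)[of "nm m"] assms(2)[of m] M0 by simp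
  qed
qed

lemma irr_First:
  assumes th: "0 < \<theta>" "\<theta> < pi" and irr: "\<theta> / pi \<notin> \<rat>"
  shows "\<exists>nm jm :: nat \<Rightarrow> nat.
          filterlim nm at_top sequentially \<and>
          (\<forall>m. 1 \<le> jm m \<and> jm m \<le> nm m) \<and>
          ((\<lambda>m. cheb_zero First (nm m) (jm m)) \<longlonglongrightarrow> cos \<theta>) \<and>
          ((\<lambda>m. entropy_at_zero First (nm m) (jm m) - entropy First (nm m) (cos \<theta>)) \<longlonglongrightarrow> 0)"
proof -
  define \<alpha> where "\<alpha> = \<theta> / pi"
  have \<alpha>: "0 < \<alpha>" "\<alpha> < 1" using th by (auto simp: \<alpha>_def field_simps)
  have irr': "\<alpha> \<notin> \<rat>" using irr \<alpha>_def by simp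
  have "\<forall>m. \<exists>np :: nat \<times> int. fst np \<ge> Suc m \<and> \<bar>real (fst np) * \<alpha> - of_int (snd np) - 1/2\<bar> < 1 / (4 * (real m + 1))"
  proof
    fix m :: nat
    have "1 / (4 * (real m + 1)) > 0" by simp
    from dioph_half[OF irr' this, of "Suc m"] show "\<exists>np :: nat \<times> int. fst np \<ge> Suc m \<and> \<bar>real (fst np) * \<alpha> - of_int (snd np) - 1/2\<bar> < 1 / (4 * (real m + 1))"
      by auto
  qed
  then obtain g where g: "\<And>m. fst (g m) \<ge> Suc m \<and> \<bar>real (fst (g m)) * \<alpha> - of_int (snd (g m)) - 1/2\<bar> < 1 / (4 * (real m + 1))"
    using choice by metis
  define nm where "nm m = fst (g m)" for m
  define pm where "pm m = snd (g m)" for m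
  define jm where "jm m = nat (pm m + 1)" for m
  define \<phi> where "\<phi> m = (2 * of_int (pm m) + 1) * pi / (2 * real (nm m))" for m
  define \<delta> where "\<delta> m = 2 * pi * \<bar>real (nm m) * \<alpha> - of_int (pm m) - 1/2\<bar>" for m
  have nm: "nm m \<ge> Suc m" for m using g nm_def by auto
  have pm: "\<bar>real (nm m) * \<alpha> - of_int (pm m) - 1/2\<bar> < 1 / (4 * (real m + 1))" for m
    using g nm_def pm_def by auto
  have pm_range: "pm m \<ge> 0 \<and> pm m + 1 \<le> int (nm m)" for m
  proof -
    have q: "1 / (4 * (real m + 1)) \<le> 1/4" by (simp add: field_simps)
    have n0: "real (nm m) > 0" using nm[of m] by simp
    have "real (nm m) * \<alpha> > 0" "real (nm m) * \<alpha> < real (nm m)" using \<alpha> n0 by auto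
    note h = this
    have pmq: "\<bar>real (nm m) * \<alpha> - of_int (pm m) - 1/2\<bar> < 1/4" using pm[of m] q by linarith
    then have c1: "real (nm m) * \<alpha> - of_int (pm m) - 1/2 < 1/4"
      and c2: "-(real (nm m) * \<alpha> - of_int (pm m) - 1/2) < 1/4" by (auto simp only: abs_less_iff)
    have a: "(of_int (pm m) :: real) > -1" using c1 h by linarith
    have b: "(of_int (pm m) :: real) < real (nm m)" using c2 h by linarith
    from a have "pm m > -1" by simp
    moreover from b have "(of_int (pm m) :: real) < of_int (int (nm m))" by simp
    then have "pm m < int (nm m)" by (simp only: of_int_less_iff)
    ultimately show ?thesis by linarith
  qed
  have jm: "1 \<le> jm m \<and> jm m \<le> nm m" for m using pm_range[of m] jm_def by auto
  have zero_eq: "cheb_zero First (nm m) (jm m) = cos (\<phi> m)" for m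
  proof -
    have "real (2 * jm m - 1) = 2 * of_int (pm m) + 1" using pm_range[of m] jm_def by auto
    then show ?thesis by (simp add: \<phi>_def)
  qed
  have n0: "real (nm m) > 0" for m using nm[of m] by simp
  have phi_range: "0 < \<phi> m \<and> \<phi> m < pi" for m
  proof -
    have "2 * of_int (pm m) + 1 > (0::real)" "2 * of_int (pm m) + 1 < 2 * real (nm m)"
      using pm_range[of m] by linarith+
    then have u1: "0 < (2 * of_int (pm m) + 1) / (2 * real (nm m))"
      and u2: "(2 * of_int (pm m) + 1) / (2 * real (nm m)) < 1" using n0[of m] by auto
    have e: "\<phi> m = pi * ((2 * of_int (pm m) + 1) / (2 * real (nm m)))" by (simp add: \<phi>_def)
    show ?thesis unfolding e using mult_pos_pos[OF pi_gt_zero u1] mult_strict_left_mono[OF u2 pi_gt_zero] by simp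
  qed
  have dist_phi: "2 * real (nm m) * \<bar>\<phi> m - \<theta>\<bar> = \<delta> m" for m
  proof -
    have "\<phi> m - \<theta> = pi / real (nm m) * (of_int (pm m) + 1/2 - real (nm m) * \<alpha>)"
      using n0[of m] by (simp add: \<phi>_def \<alpha>_def field_simps)
    then have "2 * real (nm m) * \<bar>\<phi> m - \<theta>\<bar> = 2 * pi * \<bar>of_int (pm m) + 1/2 - real (nm m) * \<alpha>\<bar>"
      using n0[of m] by (simp add: abs_mult)
    also have "\<dots> = \<delta> m" unfolding \<delta>_def by (simp add: abs_minus_commute)
    finally show ?thesis .
  qed
  have dlim: "\<delta> \<longlonglongrightarrow> 0"
  proof (rule Lim_null_comparison)
    show "eventually (\<lambda>m. norm (\<delta> m) \<le> 2 * pi * (1 / (4 * (real m + 1)))) sequentially"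
    proof (intro always_eventually allI)
      fix m
      have "\<bar>real (nm m) * \<alpha> - of_int (pm m) - 1/2\<bar> \<le> 1 / (4 * (real m + 1))" using pm[of m] by simp
      then have "2 * pi * \<bar>real (nm m) * \<alpha> - of_int (pm m) - 1/2\<bar> \<le> 2 * pi * (1 / (4 * (real m + 1)))"
        by (intro mult_left_mono) auto
      then show "norm (\<delta> m) \<le> 2 * pi * (1 / (4 * (real m + 1)))" by (simp add: \<delta>_def)
    qed
    show "(\<lambda>m. 2 * pi * (1 / (4 * (real m + 1)))) \<longlonglongrightarrow> 0" by real_asymp
  qed
  have wdiff: "\<bar>wF \<theta> i - wF (\<phi> m) i\<bar> \<le> \<delta> m" if "i < nm m" for m i
  proof (cases "i = 0")
    case True then show ?thesis by (simp add: wF_def \<delta>_def)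
  next
    case False
    have "\<bar>wF \<theta> i - wF (\<phi> m) i\<bar> = \<bar>cos (2 * real i * \<theta>) - cos (2 * real i * \<phi> m)\<bar>"
      using False by (simp add: wF_def)
    also have "\<dots> \<le> \<bar>2 * real i * \<theta> - 2 * real i * \<phi> m\<bar>" by (rule cos_lip)
    also have "\<dots> = 2 * real i * \<bar>\<phi> m - \<theta>\<bar>" by (simp add: abs_mult abs_minus_commute right_diff_distrib[symmetric])
    also have "\<dots> \<le> 2 * real (nm m) * \<bar>\<phi> m - \<theta>\<bar>" using that by (intro mult_right_mono) auto
    finally show ?thesis using dist_phi[of m] by simp
  qed
  have lim: "(\<lambda>m. Hw (wF (\<phi> m)) (nm m) - Hw (wF \<theta>) (nm m)) \<longlonglongrightarrow> 0"
  proof (rule Hw_tendsto[where \<delta> = \<delta>])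
    show "nm m > 0" for m using nm[of m] by simp
    show "wF \<theta> i \<in> {0..2} \<and> wF (\<phi> m) i \<in> {0..2} \<and> \<bar>wF \<theta> i - wF (\<phi> m) i\<bar> \<le> \<delta> m"
      if "i < nm m" for m i
      using wdiff[OF that] wF_range[of \<theta> i] wF_range[of "\<phi> m" i] by simp
    show "\<delta> \<longlonglongrightarrow> 0" by (rule dlim)
    have S: "(\<Sum>i<n. wF \<theta> i) \<ge> real n - (1 + 1 / sin \<theta>)" if "n > 0" for n
      using sum_wF_ge[OF th that] by simp
    show "eventually (\<lambda>m. (\<Sum>i<nm m. wF \<theta> i) \<ge> real (nm m) / 2) sequentially"
      by (rule ev_sum_half[where C = "1 + 1 / sin \<theta>", OF S nm])
  qed
  have ent: "entropy_at_zero First (nm m) (jm m) - entropy First (nm m) (cos \<theta>) =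
      Hw (wF (\<phi> m)) (nm m) - Hw (wF \<theta>) (nm m)" for m
    unfolding entropy_at_zero_def zero_eq using entF phi_range[of m] th n0[of m] by simp
  have zlim: "(\<lambda>m. cheb_zero First (nm m) (jm m)) \<longlonglongrightarrow> cos \<theta>"
  proof (rule LIM_zero_cancel, rule Lim_null_comparison)
    show "eventually (\<lambda>m. norm (cheb_zero First (nm m) (jm m) - cos \<theta>) \<le> \<delta> m) sequentially"
    proof (intro always_eventually allI)
      fix m
      have "\<bar>cos (\<phi> m) - cos \<theta>\<bar> \<le> \<bar>\<phi> m - \<theta>\<bar>" by (rule cos_lip)
      also have "\<dots> \<le> 2 * real (nm m) * \<bar>\<phi> m - \<theta>\<bar>"
      proof -
        have "1 \<le> 2 * real (nm m)" using nm[of m] by simp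
        then show ?thesis using mult_right_mono[of 1 "2 * real (nm m)" "\<bar>\<phi> m - \<theta>\<bar>"] by simp
      qed
      finally show "norm (cheb_zero First (nm m) (jm m) - cos \<theta>) \<le> \<delta> m"
        using zero_eq dist_phi by simp
    qed
    show "\<delta> \<longlonglongrightarrow> 0" by (rule dlim)
  qed
  have "filterlim nm at_top sequentially"
    by (rule filterlim_at_top_mono[OF filterlim_ident]) (rule always_eventually, use nm in \<open>auto intro: Suc_leD\<close>)
  then show ?thesis using jm zlim lim ent by (intro exI[of _ nm] exI[of _ jm]) auto
qed

lemma irr_Second:
  assumes th: "0 < \<theta>" "\<theta> < pi" and irr: "\<theta> / pi \<notin> \<rat>"
  shows "\<exists>nm jm :: nat \<Rightarrow> nat.
          filterlim nm at_top sequentially \<and>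
          (\<forall>m. 1 \<le> jm m \<and> jm m \<le> nm m) \<and>
          ((\<lambda>m. cheb_zero Second (nm m) (jm m)) \<longlonglongrightarrow> cos \<theta>) \<and>
          ((\<lambda>m. entropy_at_zero Second (nm m) (jm m) - entropy Second (nm m) (cos \<theta>)) \<longlonglongrightarrow> 0)"
proof -
  define \<alpha> where "\<alpha> = \<theta> / pi"
  have \<alpha>: "0 < \<alpha>" "\<alpha> < 1" using th by (auto simp: \<alpha>_def field_simps)
  have irr': "\<alpha> \<notin> \<rat>" using irr \<alpha>_def by simp
  define c0 where "c0 = min \<alpha> (1 - \<alpha>) / 2"
  have c0: "c0 > 0" "c0 < \<alpha>" "c0 < 1 - \<alpha>" using \<alpha> by (auto simp: c0_def)
  have "\<forall>m. \<exists>np :: nat \<times> int. fst np \<ge> Suc (Suc m) \<and> \<bar>real (fst np) * \<alpha> - of_int (snd np)\<bar> < c0 / (real m + 1)"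
  proof
    fix m :: nat
    have "c0 / (real m + 1) > 0" using c0 by simp
    from dioph_int[OF irr' this, of "Suc (Suc m)"] show "\<exists>np :: nat \<times> int. fst np \<ge> Suc (Suc m) \<and> \<bar>real (fst np) * \<alpha> - of_int (snd np)\<bar> < c0 / (real m + 1)"
      by auto
  qed
  then obtain g where g: "\<And>m. fst (g m) \<ge> Suc (Suc m) \<and> \<bar>real (fst (g m)) * \<alpha> - of_int (snd (g m))\<bar> < c0 / (real m + 1)"
    using choice by metis
  define n0 where "n0 m = fst (g m)" for m
  define nm where "nm m = n0 m - 1" for m
  define pm where "pm m = snd (g m)" for m
  define jm where "jm m = nat (pm m)" for m
  define \<phi> where "\<phi> m = of_int (pm m) * pi / real (n0 m)" for m
  define \<delta> where "\<delta> m = 2 * pi * \<bar>real (n0 m) * \<alpha> - of_int (pm m)\<bar>" for m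
  have n0: "n0 m \<ge> Suc (Suc m)" for m using g n0_def by auto
  have nm: "nm m \<ge> Suc m" for m using n0[of m] nm_def by auto
  have n0r: "real (n0 m) = real (nm m) + 1" for m using n0[of m] nm_def by auto
  have pm: "\<bar>real (n0 m) * \<alpha> - of_int (pm m)\<bar> < c0 / (real m + 1)" for m
    using g n0_def pm_def by auto
  have pm_range: "pm m \<ge> 1 \<and> pm m \<le> int (nm m)" for m
  proof -
    have q: "c0 / (real m + 1) \<le> c0" using c0 by (simp add: field_simps)
    have n1: "real (n0 m) \<ge> 1" using n0[of m] by simp
    have h1: "real (n0 m) * \<alpha> \<ge> \<alpha>" using \<alpha> n1 by simp
    have h2: "real (n0 m) * (1 - \<alpha>) \<ge> 1 - \<alpha>" using \<alpha> n1 by simp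
    have pmq: "\<bar>real (n0 m) * \<alpha> - of_int (pm m)\<bar> < c0" using pm[of m] q by linarith
    then have c1: "real (n0 m) * \<alpha> - of_int (pm m) < c0"
      and c2: "-(real (n0 m) * \<alpha> - of_int (pm m)) < c0" by (auto simp only: abs_less_iff)
    have a: "(of_int (pm m) :: real) > 0" using c1 h1 c0 by linarith
    have b: "(of_int (pm m) :: real) < real (n0 m)" using c2 h2 c0 by (simp add: algebra_simps)
    from a have "pm m > 0" by simp
    moreover from b have "(of_int (pm m) :: real) < of_int (int (n0 m))" by simp
    then have "pm m < int (n0 m)" by (simp only: of_int_less_iff)
    ultimately show ?thesis using nm_def n0[of m] by auto
  qed
  have jm: "1 \<le> jm m \<and> jm m \<le> nm m" for m using pm_range[of m] jm_def by auto
  have zero_eq: "cheb_zero Second (nm m) (jm m) = cos (\<phi> m)" for m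
  proof -
    have "real (jm m) = of_int (pm m)" using pm_range[of m] jm_def by auto
    then show ?thesis using n0r[of m] by (simp add: \<phi>_def)
  qed
  have n0p: "real (n0 m) > 0" for m using n0[of m] by simp
  have phi_range: "0 < \<phi> m \<and> \<phi> m < pi" for m
  proof -
    have "of_int (pm m) > (0::real)" "of_int (pm m) < real (n0 m)"
      using pm_range[of m] n0r[of m] by auto
    then have u1: "0 < of_int (pm m) / real (n0 m)"
      and u2: "of_int (pm m) / real (n0 m) < 1" using n0p[of m] by auto
    have e: "\<phi> m = pi * (of_int (pm m) / real (n0 m))" by (simp add: \<phi>_def)
    show ?thesis unfolding e using mult_pos_pos[OF pi_gt_zero u1] mult_strict_left_mono[OF u2 pi_gt_zero] by simp
  qed
  have dist_phi: "2 * real (nm m) * \<bar>\<phi> m - \<theta>\<bar> \<le> \<delta> m" for m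
  proof -
    have "\<phi> m - \<theta> = pi / real (n0 m) * (of_int (pm m) - real (n0 m) * \<alpha>)"
      using n0p[of m] by (simp add: \<phi>_def \<alpha>_def field_simps)
    then have "2 * real (n0 m) * \<bar>\<phi> m - \<theta>\<bar> = 2 * pi * \<bar>of_int (pm m) - real (n0 m) * \<alpha>\<bar>"
      using n0p[of m] by (simp add: abs_mult)
    also have "\<dots> = \<delta> m" unfolding \<delta>_def by (simp add: abs_minus_commute)
    finally have "2 * real (n0 m) * \<bar>\<phi> m - \<theta>\<bar> = \<delta> m" .
    moreover have "2 * real (nm m) * \<bar>\<phi> m - \<theta>\<bar> \<le> 2 * real (n0 m) * \<bar>\<phi> m - \<theta>\<bar>"
      using n0r[of m] by (intro mult_right_mono) auto
    ultimately show ?thesis by simp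
  qed
  have dlim: "\<delta> \<longlonglongrightarrow> 0"
  proof (rule Lim_null_comparison)
    show "eventually (\<lambda>m. norm (\<delta> m) \<le> 2 * pi * (c0 / (real m + 1))) sequentially"
    proof (intro always_eventually allI)
      fix m
      have "\<bar>real (n0 m) * \<alpha> - of_int (pm m)\<bar> \<le> c0 / (real m + 1)" using pm[of m] by simp
      then have "2 * pi * \<bar>real (n0 m) * \<alpha> - of_int (pm m)\<bar> \<le> 2 * pi * (c0 / (real m + 1))"
        by (intro mult_left_mono) auto
      then show "norm (\<delta> m) \<le> 2 * pi * (c0 / (real m + 1))" by (simp add: \<delta>_def)
    qed
    show "(\<lambda>m. 2 * pi * (c0 / (real m + 1))) \<longlonglongrightarrow> 0" by real_asymp
  qed
  have wdiff: "\<bar>wS \<theta> i - wS (\<phi> m) i\<bar> \<le> \<delta> m" if "i < nm m" for m i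
  proof -
    have "\<bar>wS \<theta> i - wS (\<phi> m) i\<bar> = \<bar>cos (2 * real (Suc i) * \<phi> m) - cos (2 * real (Suc i) * \<theta>)\<bar>"
      by (simp add: wS_def)
    also have "\<dots> \<le> \<bar>2 * real (Suc i) * \<phi> m - 2 * real (Suc i) * \<theta>\<bar>" by (rule cos_lip)
    also have "\<dots> = 2 * real (Suc i) * \<bar>\<phi> m - \<theta>\<bar>" by (simp add: abs_mult right_diff_distrib[symmetric])
    also have "\<dots> \<le> 2 * real (nm m) * \<bar>\<phi> m - \<theta>\<bar>" using that by (intro mult_right_mono) auto
    finally show ?thesis using dist_phi[of m] by simp
  qed
  have lim: "(\<lambda>m. Hw (wS (\<phi> m)) (nm m) - Hw (wS \<theta>) (nm m)) \<longlonglongrightarrow> 0"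
  proof (rule Hw_tendsto[where \<delta> = \<delta>])
    show "nm m > 0" for m using nm[of m] by simp
    show "wS \<theta> i \<in> {0..2} \<and> wS (\<phi> m) i \<in> {0..2} \<and> \<bar>wS \<theta> i - wS (\<phi> m) i\<bar> \<le> \<delta> m"
      if "i < nm m" for m i
      using wdiff[OF that] wS_range[of \<theta> i] wS_range[of "\<phi> m" i] by simp
    show "\<delta> \<longlonglongrightarrow> 0" by (rule dlim)
    have S: "(\<Sum>i<n. wS \<theta> i) \<ge> real n - (1 / sin \<theta>)" if "n > 0" for n
      using sum_wS_ge[OF th, of n] by simp
    show "eventually (\<lambda>m. (\<Sum>i<nm m. wS \<theta> i) \<ge> real (nm m) / 2) sequentially"
      by (rule ev_sum_half[where C = "1 / sin \<theta>", OF S nm])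
  qed
  have ent: "entropy_at_zero Second (nm m) (jm m) - entropy Second (nm m) (cos \<theta>) =
      Hw (wS (\<phi> m)) (nm m) - Hw (wS \<theta>) (nm m)" for m
  proof -
    have "nm m > 0" using nm[of m] by simp
    then show ?thesis
      unfolding entropy_at_zero_def zero_eq using entS phi_range[of m] th by simp
  qed
  have zlim: "(\<lambda>m. cheb_zero Second (nm m) (jm m)) \<longlonglongrightarrow> cos \<theta>"
  proof (rule LIM_zero_cancel, rule Lim_null_comparison)
    show "eventually (\<lambda>m. norm (cheb_zero Second (nm m) (jm m) - cos \<theta>) \<le> \<delta> m) sequentially"
    proof (intro always_eventually allI)
      fix m
      have "\<bar>cos (\<phi> m) - cos \<theta>\<bar> \<le> \<bar>\<phi> m - \<theta>\<bar>" by (rule cos_lip)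
      also have "\<dots> \<le> 2 * real (nm m) * \<bar>\<phi> m - \<theta>\<bar>"
      proof -
        have "1 \<le> 2 * real (nm m)" using nm[of m] by simp
        then show ?thesis using mult_right_mono[of 1 "2 * real (nm m)" "\<bar>\<phi> m - \<theta>\<bar>"] by simp
      qed
      finally show "norm (cheb_zero Second (nm m) (jm m) - cos \<theta>) \<le> \<delta> m"
        using zero_eq dist_phi[of m] by simp
    qed
    show "\<delta> \<longlonglongrightarrow> 0" by (rule dlim)
  qed
  have "filterlim nm at_top sequentially"
    by (rule filterlim_at_top_mono[OF filterlim_ident]) (rule always_eventually, use nm in \<open>auto intro: Suc_leD\<close>)
  then show ?thesis using jm zlim lim ent by (intro exI[of _ nm] exI[of _ jm]) auto
qed

lemma rat_exist:
  assumes th: "0 < \<theta>" "\<theta> < pi" and q: "\<theta> / pi = real s / real k" and sk: "s < k" "gcd s k = 1"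
    and c: "c = Second \<or> even k"
  shows "\<exists>nm jm :: nat \<Rightarrow> nat.
          filterlim nm at_top sequentially \<and>
          (\<forall>m. 1 \<le> jm m \<and> jm m \<le> nm m) \<and>
          ((\<lambda>m. cheb_zero c (nm m) (jm m)) \<longlonglongrightarrow> cos \<theta>) \<and>
          ((\<lambda>m. entropy_at_zero c (nm m) (jm m) - entropy c (nm m) (cos \<theta>)) \<longlonglongrightarrow> 0)"
proof -
  have k0: "k > 0" using sk by simp
  have s0: "s > 0"
  proof (rule ccontr)
    assume "\<not> s > 0" then have "s = 0" by simp
    then show False using q th by simp
  qed
  have thq: "\<theta> = real s * pi / real k" using q by (simp add: field_simps)
  have main: "\<exists>nm jm :: nat \<Rightarrow> nat. (\<forall>m. nm m \<ge> m) \<and> (\<forall>m. 1 \<le> jm m \<and> jm m \<le> nm m) \<and>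
      (\<forall>m. cheb_zero c (nm m) (jm m) = cos \<theta>)"
  proof (cases c)
    case Second
    define nm where "nm m = k * (m + 1) - 1" for m
    define jm where "jm m = s * (m + 1)" for m
    have "nm m \<ge> m" for m
    proof -
      have "1 * (m + 1) \<le> k * (m + 1)" using k0 by (intro mult_le_mono1) simp
      then show ?thesis by (simp add: nm_def)
    qed
    moreover have "1 \<le> jm m \<and> jm m \<le> nm m" for m
    proof -
      have "(s + 1) * (m + 1) \<le> k * (m + 1)" using sk(1) by (intro mult_le_mono1) simp
      then have "s * (m + 1) + 1 \<le> k * (m + 1)" by (simp add: algebra_simps)
      then show ?thesis using s0 by (simp add: jm_def nm_def)
    qed
    moreover have "cheb_zero c (nm m) (jm m) = cos \<theta>" for m
    proof -
      have "k * (m + 1) \<ge> 1" using k0 by simp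
      then have "real (nm m) + 1 = real k * (real m + 1)" by (simp add: nm_def of_nat_diff algebra_simps)
      moreover have "real (jm m) * pi / (real k * (real m + 1)) = real s * pi / real k"
      proof -
        have nz: "real m + 1 \<noteq> 0" "real k \<noteq> 0" using k0 by auto
        have "real (jm m) = (real m + 1) * real s" by (simp add: jm_def algebra_simps)
        then have "real (jm m) * pi / (real k * (real m + 1)) = ((real m + 1) * (real s * pi)) / ((real m + 1) * real k)"
          by (simp add: ac_simps)
        also have "\<dots> = real s * pi / real k" by (rule nonzero_mult_divide_mult_cancel_left[OF nz(1)])
        finally show ?thesis .
      qed
      ultimately show ?thesis using Second by (simp add: thq)
    qed
    ultimately show ?thesis by blast
  next
    case First
    then have ek: "even k" using c by simp
    then obtain k' where k': "k = 2 * k'" by blast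
    have os: "odd s"
    proof
      assume "even s"
      then have "2 dvd gcd s k" using ek by simp
      then show False using sk(2) by simp
    qed
    then obtain s' where s': "s = 2 * s' + 1" by (metis oddE)
    define nm where "nm m = k' * (2 * m + 1)" for m
    define jm where "jm m = s' * (2 * m + 1) + m + 1" for m
    have k'0: "k' \<ge> 1" using k' k0 by simp
    have "nm m \<ge> m" for m
    proof -
      have "1 * (2 * m + 1) \<le> k' * (2 * m + 1)" using k'0 by (intro mult_le_mono1) simp
      then show ?thesis by (simp add: nm_def)
    qed
    moreover have "1 \<le> jm m \<and> jm m \<le> nm m" for m
    proof -
      have "s' + 1 \<le> k'" using sk(1) s' k' by simp
      then have "(s' + 1) * (2 * m + 1) \<le> k' * (2 * m + 1)" by (rule mult_le_mono1)
      then show ?thesis by (simp add: jm_def nm_def algebra_simps)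
    qed
    moreover have "cheb_zero c (nm m) (jm m) = cos \<theta>" for m
    proof -
      have "2 * jm m - 1 = s * (2 * m + 1)" by (simp add: jm_def s' algebra_simps)
      then have "real (2 * jm m - 1) = real (s * (2 * m + 1))" by (simp only:)
      then have "real (2 * jm m - 1) = real s * (2 * real m + 1)" by (simp add: algebra_simps)
      moreover have "2 * real (nm m) = real k * (2 * real m + 1)" by (simp add: nm_def k' algebra_simps)
      moreover have nz: "2 * real m + 1 \<noteq> 0" "real k \<noteq> 0" using k0 by auto
      ultimately have "real (2 * jm m - 1) * pi / (2 * real (nm m)) = ((2 * real m + 1) * (real s * pi)) / ((2 * real m + 1) * real k)"
        by (simp add: ac_simps)
      also have "\<dots> = real s * pi / real k" by (rule nonzero_mult_divide_mult_cancel_left[OF nz(1)])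
      finally have "real (2 * jm m - 1) * pi / (2 * real (nm m)) = real s * pi / real k" .
      then show ?thesis using First by (simp add: thq)
    qed
    ultimately show ?thesis by blast
  qed
  then obtain nm jm :: "nat \<Rightarrow> nat" where nm: "\<forall>m. nm m \<ge> m" and jm: "\<forall>m. 1 \<le> jm m \<and> jm m \<le> nm m"
    and z: "\<forall>m. cheb_zero c (nm m) (jm m) = cos \<theta>" by blast
  have "filterlim nm at_top sequentially"
    by (rule filterlim_at_top_mono[OF filterlim_ident]) (use nm in \<open>auto intro: always_eventually\<close>)
  moreover have "(\<lambda>m. entropy_at_zero c (nm m) (jm m) - entropy c (nm m) (cos \<theta>)) = (\<lambda>m. 0)"
    using z by (simp add: entropy_at_zero_def)
  moreover have "(\<lambda>m. cheb_zero c (nm m) (jm m)) = (\<lambda>m. cos \<theta>)" using z by simp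
  ultimately show ?thesis using jm by (intro exI[of _ nm] exI[of _ jm]) auto
qed

definition Kf :: "real \<Rightarrow> real \<Rightarrow> real" where
  "Kf y v = (1 + cos v) * (2 * cos v + 2 * y) / (1 + 2 * y * cos v + y\<^sup>2)"
definition Rf :: "real \<Rightarrow> real \<Rightarrow> real" where
  "Rf y v = (cos (2 * v) + y * cos v) / (1 + 2 * y * cos v + y\<^sup>2)"

lemma D_pos: fixes y :: real assumes "0 \<le> y" "y < 1" shows "1 + 2 * y * cos v + y\<^sup>2 > 0"
proof -
  have "1 + 2 * y * cos v + y\<^sup>2 = (1 - y)\<^sup>2 + 2 * y * (1 + cos v)" by (simp add: power2_eq_square algebra_simps)
  moreover have "1 + cos v \<ge> 0" using cos_ge_minus_one[of v] by linarith
  then have "2 * y * (1 + cos v) \<ge> 0" using assms by simp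
  moreover have "(1 - y)\<^sup>2 > 0" using assms by simp
  ultimately show ?thesis by linarith
qed

lemma R_sums:
  assumes "0 \<le> y" "y < 1"
  shows "(\<lambda>m. (-y) ^ m * cos (real (m + 2) * v)) sums Rf y v"
proof -
  define z where "z = cis v"
  have nz: "norm (complex_of_real (-y) * z) < 1" using assms by (simp add: z_def norm_mult)
  have "(\<lambda>m. (complex_of_real (-y) * z) ^ m) sums (1 / (1 - complex_of_real (-y) * z))"
    by (rule geometric_sums[OF nz])
  then have "(\<lambda>m. z ^ 2 * (complex_of_real (-y) * z) ^ m) sums (z ^ 2 * (1 / (1 - complex_of_real (-y) * z)))"
    by (rule sums_mult)
  then have "(\<lambda>m. Re (z ^ 2 * (complex_of_real (-y) * z) ^ m)) sums Re (z ^ 2 * (1 / (1 - complex_of_real (-y) * z)))"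
    by (rule sums_Re)
  moreover have "Re (z ^ 2 * (complex_of_real (-y) * z) ^ m) = (-y) ^ m * cos (real (m + 2) * v)" for m
  proof -
    have h: "(complex_of_real (-y) * z) ^ m = complex_of_real ((-y) ^ m) * z ^ m"
      by (simp only: power_mult_distrib of_real_power)
    have "z ^ 2 * (complex_of_real (-y) * z) ^ m = complex_of_real ((-y) ^ m) * (z ^ m * z ^ 2)"
      unfolding h by (simp only: mult_ac)
    also have "\<dots> = complex_of_real ((-y) ^ m) * z ^ (m + 2)" by (simp only: power_add)
    finally have "z ^ 2 * (complex_of_real (-y) * z) ^ m = complex_of_real ((-y) ^ m) * z ^ (m + 2)" .
    also have "\<dots> = complex_of_real ((-y) ^ m) * cis (real (m + 2) * v)" by (simp only: z_def Complex.DeMoivre)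
    finally show ?thesis by simp
  qed
  moreover have "Re (z ^ 2 * (1 / (1 - complex_of_real (-y) * z))) = Rf y v"
  proof -
    have e: "z ^ 2 * (1 / (1 - complex_of_real (-y) * z)) = cis (2 * v) / (1 + complex_of_real y * cis v)"
      by (simp add: z_def Complex.DeMoivre)
    have D: "1 + 2 * y * cos v + y\<^sup>2 > 0" using D_pos assms by blast
    have den: "(1 + y * cos v)\<^sup>2 + (y * sin v)\<^sup>2 = 1 + 2 * y * cos v + y\<^sup>2"
    proof -
      have "(1 + y * cos v)\<^sup>2 + (y * sin v)\<^sup>2 = 1 + 2 * y * cos v + y\<^sup>2 * ((sin v)\<^sup>2 + (cos v)\<^sup>2)"
        by algebra
      then show ?thesis by (simp only: sin_cos_squared_add mult_1_right)
    qed
    have num: "cos (2 * v) * (1 + y * cos v) + sin (2 * v) * (y * sin v) = cos (2 * v) + y * cos v"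
    proof -
      have "cos (2 * v) * cos v + sin (2 * v) * sin v = cos (2 * v - v)" by (rule cos_diff[symmetric])
      then have "cos (2 * v) * cos v + sin (2 * v) * sin v = cos v" by simp
      then show ?thesis by (simp add: algebra_simps) (metis distrib_left mult.assoc mult.commute)
    qed
    show ?thesis unfolding e Re_divide using den num by (simp add: Rf_def)
  qed
  ultimately show ?thesis by simp
qed

lemma K_decomp:
  assumes "0 \<le> y" "y < 1"
  shows "Kf y v = 1 + (2 - y) * cos v + (1 - y)\<^sup>2 * Rf y v"
proof -
  have D: "1 + 2 * y * cos v + y\<^sup>2 > 0" using D_pos assms by blast
  define c where "c = cos v"
  have c2: "cos (2 * v) = 2 * c\<^sup>2 - 1" by (simp add: c_def cos_double_cos)
  have "(1 + c) * (2 * c + 2 * y) = (1 + 2 * y * c + y\<^sup>2) * (1 + (2 - y) * c) + (1 - y)\<^sup>2 * (2 * c\<^sup>2 - 1 + y * c)"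
    by (simp add: power2_eq_square algebra_simps)
  then show ?thesis using D unfolding Kf_def Rf_def c2 c_def[symmetric]
    by (simp add: field_simps)
qed

lemma K_at1: "Kf 1 v = 1 + cos v"
proof (cases "cos v = -1")
  case True then show ?thesis by (simp add: Kf_def)
next
  case False
  have "2 + 2 * cos v \<noteq> 0" using False by linarith
  then show ?thesis by (simp add: Kf_def field_simps)
qed

lemma K_int: "((\<lambda>y. Kf y v) has_integral ((1 + cos v) * ln 2 + flog (1 + cos v))) {0..1}"
proof (cases "cos v = -1")
  case True
  then have "(\<lambda>y. Kf y v) = (\<lambda>y. 0)" by (simp add: Kf_def fun_eq_iff)
  then show ?thesis using True by (simp add: flog_def)
next
  case False
  then have c: "1 + cos v > 0" using cos_ge_minus_one[of v] by linarith
  have D: "1 + 2 * y * cos v + y\<^sup>2 > 0" if "y \<in> {0..1}" for y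
  proof -
    have "1 + 2 * y * cos v + y\<^sup>2 = (1 - y)\<^sup>2 + 2 * y * (1 + cos v)" by (simp add: power2_eq_square algebra_simps)
    moreover have "(1 - y)\<^sup>2 + 2 * y * (1 + cos v) > 0"
    proof (cases "y = 0")
      case True then show ?thesis by simp
    next
      case False then have "y > 0" using that by auto
      then have "2 * y * (1 + cos v) > 0" using c by simp
      then show ?thesis by (smt (verit) zero_le_power2)
    qed
    ultimately show ?thesis by simp
  qed
  define G where "G y = (1 + cos v) * ln (1 + 2 * y * cos v + y\<^sup>2)" for y
  have "((\<lambda>y. Kf y v) has_integral (G 1 - G 0)) {0..1}"
  proof (rule fundamental_theorem_of_calculus)
    fix y :: real assume y: "y \<in> {0..1}"
    have "(G has_real_derivative (1 + cos v) * ((2 * cos v + 2 * y) / (1 + 2 * y * cos v + y\<^sup>2))) (at y within {0..1})"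
      unfolding G_def using D[OF y]
      by (auto intro!: derivative_eq_intros simp: power2_eq_square)
    then have "(G has_real_derivative Kf y v) (at y within {0..1})" by (simp add: Kf_def)
    then show "(G has_vector_derivative Kf y v) (at y within {0..1})"
      by (simp add: has_real_derivative_iff_has_vector_derivative)
  qed simp
  moreover have "G 1 - G 0 = (1 + cos v) * ln 2 + flog (1 + cos v)"
  proof -
    have e: "1 + 2 * 1 * cos v + 1\<^sup>2 = 2 * (1 + cos v)" by simp
    have "G 1 = (1 + cos v) * ln (2 * (1 + cos v))" unfolding G_def e ..
    also have "\<dots> = (1 + cos v) * (ln 2 + ln (1 + cos v))" using c ln_mult[of 2 "1 + cos v"] by simp
    finally have "G 1 = (1 + cos v) * (ln 2 + ln (1 + cos v))" .
    then show ?thesis by (simp add: G_def flog_def algebra_simps)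
  qed
  ultimately show ?thesis by simp
qed

lemma sin_npi_minus: "sin (real M * pi - x) = - ((-1) ^ M) * sin x"
  by (simp add: sin_diff sin_npi cos_npi)

lemma dirichlet_N:
  assumes n: "n > 0" and s: "sin (a/2) \<noteq> 0" and na: "real n * a = real M * pi"
  shows "(\<Sum>i<n. cos (real i * a)) = (1 - (-1) ^ M) / 2"
proof -
  have "(real n - 1/2) * a = real M * pi - a/2" using na by (simp add: algebra_simps)
  then have "sin ((real n - 1/2) * a) = - ((-1) ^ M) * sin (a/2)" by (simp add: sin_npi_minus)
  then show ?thesis unfolding dirichlet[OF s] using s by (simp add: field_simps)
qed

lemma cos_sum_odd:
  assumes "odd N" "n > 0"
  shows "(\<Sum>i<n. cos (real i * (pi * real N / real n))) = 1"
proof -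
  define a where "a = pi * real N / real n"
  have s: "sin (a/2) \<noteq> 0"
  proof
    assume "sin (a/2) = 0"
    then obtain j :: int where j: "a/2 = of_int j * pi" using sin_zero_iff_int2 by blast
    then have "real N = 2 * real n * of_int j" using assms(2) by (simp add: a_def field_simps)
    then have "of_int (int N) = (of_int (2 * int n * j) :: real)" by simp
    then have "int N = 2 * int n * j" by (simp only: of_int_eq_iff)
    then have "even (int N)" by simp
    then show False using assms(1) by simp
  qed
  have "real n * a = real N * pi" using assms(2) by (simp add: a_def)
  from dirichlet_N[OF assms(2) s this] assms(1) show ?thesis by (simp add: a_def)
qed

lemma cos_sum_even:
  assumes "even N" "n > 0"
  shows "(\<Sum>i<n. cos (real i * (pi * real N / real n))) \<ge> 0"
proof -
  define a where "a = pi * real N / real n"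
  show ?thesis
  proof (cases "sin (a/2) = 0")
    case True
    then obtain j :: int where j: "a/2 = of_int j * pi" using sin_zero_iff_int2 by blast
    have "cos (real i * a) = 1" for i :: nat
    proof -
      have "real i * a = 2 * pi * of_int (int i * j)" using j by (simp add: algebra_simps)
      then show ?thesis by (simp only: cos_int_2pin)
    qed
    then show ?thesis unfolding a_def[symmetric] by simp
  next
    case False
    have "real n * a = real N * pi" using assms(2) by (simp add: a_def)
    from dirichlet_N[OF assms(2) False this] assms(1) show ?thesis by (simp add: a_def)
  qed
qed

lemma cos_sum_root:
  assumes k: "k > 0" and cop: "coprime s k"
  shows "(\<Sum>r<k. cos (real r * (2 * pi * real s * real l / real k))) = (if k dvd l then real k else 0)"
proof (cases "k dvd l")
  case True
  then obtain u where u: "l = k * u" by blast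
  have "cos (real r * (2 * pi * real s * real l / real k)) = 1" for r
  proof -
    have "real r * (2 * pi * real s * real l / real k) = 2 * pi * of_int (int (r * s * u))"
      using k by (simp add: u field_simps)
    then show ?thesis by (simp only: cos_int_2pin)
  qed
  then show ?thesis using True by simp
next
  case False
  define a where "a = 2 * pi * real s * real l / real k"
  have s: "sin (a/2) \<noteq> 0"
  proof
    assume "sin (a/2) = 0"
    then obtain j :: int where j: "a/2 = of_int j * pi" using sin_zero_iff_int2 by blast
    then have "real s * real l = real k * of_int j" using k by (simp add: a_def field_simps)
    then have "of_int (int (s * l)) = (of_int (int k * j) :: real)" by simp
    then have "int (s * l) = int k * j" by (simp only: of_int_eq_iff)
    then have "int k dvd int (s * l)" by simp
    then have "k dvd s * l" by (simp only: int_dvd_int_iff)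
    then have "k dvd l" using cop by (simp add: coprime_commute coprime_dvd_mult_right_iff)
    then show False using False by simp
  qed
  have "real k * a = real (2 * s * l) * pi" using k by (simp add: a_def)
  from dirichlet_N[OF k s this] False show ?thesis by (simp add: a_def)
qed

lemma fam_series:
  assumes "0 \<le> y" "y < 1"
  shows "(\<lambda>m. (-y) ^ m * (\<Sum>i\<in>I. cos (real (m + 2) * v i))) sums (\<Sum>i\<in>I. Rf y (v i))"
proof -
  have "(\<lambda>m. \<Sum>i\<in>I. (-y) ^ m * cos (real (m + 2) * v i)) sums (\<Sum>i\<in>I. Rf y (v i))"
    by (rule sums_sum) (rule R_sums[OF assms])
  then show ?thesis by (simp add: sum_distrib_left)
qed

lemma fam_K:
  assumes "0 \<le> y" "y < 1"
  shows "(\<Sum>i\<in>I. Kf y (v i)) = real (card I) + (2 - y) * (\<Sum>i\<in>I. cos (v i)) + (1 - y)\<^sup>2 * (\<Sum>i\<in>I. Rf y (v i))"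
  using K_decomp[OF assms] by (simp add: sum.distrib sum_distrib_left)

lemma fam_int:
  assumes "finite I"
  shows "((\<lambda>y. \<Sum>i\<in>I. Kf y (v i)) has_integral (\<Sum>i\<in>I. (1 + cos (v i)) * ln 2 + flog (1 + cos (v i)))) {0..1}"
  by (rule has_integral_sum[OF assms]) (rule K_int)

lemma zero_fam:
  assumes n: "n > 0" and c: "odd c"
  shows "(\<Sum>i<n. flog (1 + cos (real i * (pi * real c / real n)))) \<ge> (real n + 1) * (1 - ln 2)"
proof -
  define v where "v i = real i * (pi * real c / real n)" for i
  have C: "(\<Sum>i<n. cos (real l * v i)) = (\<Sum>i<n. cos (real i * (pi * real (c * l) / real n)))" for l
    by (intro sum.cong) (auto simp: v_def algebra_simps)
  have C1: "(\<Sum>i<n. cos (v i)) = 1" using cos_sum_odd[OF c n] by (simp add: v_def)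
  have Codd: "(\<Sum>i<n. cos (real l * v i)) = 1" if "odd l" for l
    unfolding C using cos_sum_odd[OF _ n, of "c * l"] c that by simp
  have Cev: "(\<Sum>i<n. cos (real l * v i)) \<ge> 0" if "even l" for l
    unfolding C using cos_sum_even[OF _ n, of "c * l"] that by simp
  have bound: "(\<Sum>i<n. Kf y (v i)) \<ge> real n + 1" if y: "y \<in> {0..1}" for y
  proof (cases "y = 1")
    case True
    then show ?thesis using C1 by (simp add: K_at1 sum.distrib)
  next
    case False
    then have y0: "0 \<le> y" "y < 1" using y by auto
    have ser: "(\<lambda>m. (-y) ^ m * (\<Sum>i<n. cos (real (m + 2) * v i))) sums (\<Sum>i<n. Rf y (v i))"
      by (rule fam_series[OF y0])
    have geo: "(\<lambda>m. - (y ^ m)) sums (- (1 / (1 - y)))"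
      using geometric_sums[of y] y0 by (intro sums_minus) simp
    have tm: "- (y ^ m) \<le> (-y) ^ m * (\<Sum>i<n. cos (real (m + 2) * v i))" for m
    proof (cases "even m")
      case True
      then have "(-y) ^ m = y ^ m" by simp
      moreover have "(\<Sum>i<n. cos (real (m + 2) * v i)) \<ge> 0" using Cev[of "m+2"] True by simp
      moreover have "y ^ m \<ge> 0" using y0 by simp
      ultimately have "(-y) ^ m * (\<Sum>i<n. cos (real (m + 2) * v i)) \<ge> 0"
        by (metis mult_nonneg_nonneg)
      moreover have "- (y ^ m) \<le> 0" using y0 by simp
      ultimately show ?thesis by linarith
    next
      case False
      then have "(-y) ^ m = - (y ^ m)" by simp
      moreover have "(\<Sum>i<n. cos (real (m + 2) * v i)) = 1" using Codd[of "m+2"] False by simp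
      ultimately show ?thesis by simp
    qed
    have R: "(\<Sum>i<n. Rf y (v i)) \<ge> - (1 / (1 - y))" by (rule sums_le[OF tm geo ser])
    have "(1 - y)\<^sup>2 * (\<Sum>i<n. Rf y (v i)) \<ge> (1 - y)\<^sup>2 * (- (1 / (1 - y)))"
      using R by (intro mult_left_mono) auto
    also have "(1 - y)\<^sup>2 * (- (1 / (1 - y))) = - (1 - y)" using y0 by (simp add: power2_eq_square)
    finally have "(1 - y)\<^sup>2 * (\<Sum>i<n. Rf y (v i)) \<ge> - (1 - y)" .
    then show ?thesis using fam_K[OF y0, of v "{..<n}"] C1 by simp
  qed
  have I1: "((\<lambda>y. \<Sum>i<n. Kf y (v i)) has_integral (\<Sum>i<n. (1 + cos (v i)) * ln 2 + flog (1 + cos (v i)))) {0..1}"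
    by (rule fam_int) simp
  have I2: "((\<lambda>y. real n + 1) has_integral (real n + 1)) {0..1::real}"
    using has_integral_const_real[of "real n + 1" 0 "1::real"] by simp
  have "real n + 1 \<le> (\<Sum>i<n. (1 + cos (v i)) * ln 2 + flog (1 + cos (v i)))"
    by (rule has_integral_le[OF I2 I1]) (use bound in auto)
  also have "\<dots> = (real n + 1) * ln 2 + (\<Sum>i<n. flog (1 + cos (v i)))"
    using C1 by (simp add: sum.distrib sum_distrib_right[symmetric])
  finally show ?thesis by (simp add: v_def algebra_simps)
qed

lemma poly_int:
  "((\<lambda>y::real. (1 - y)\<^sup>2 * y ^ j) has_integral (1 / (real j + 1) - 2 / (real j + 2) + 1 / (real j + 3))) {0..1}"
proof -
  define F where "F y = y ^ (j + 1) / (real j + 1) - 2 * y ^ (j + 2) / (real j + 2) + y ^ (j + 3) / (real j + 3)" for y :: real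
  have "((\<lambda>y::real. (1 - y)\<^sup>2 * y ^ j) has_integral (F 1 - F 0)) {0..1}"
  proof (rule fundamental_theorem_of_calculus)
    fix y :: real assume "y \<in> {0..1}"
    have "(F has_real_derivative (1 - y)\<^sup>2 * y ^ j) (at y within {0..1})"
    proof -
      have pw: "((\<lambda>y. y ^ (j + a) / (real j + a)) has_real_derivative y ^ (j + a - 1)) (at y within {0..1})"
        if "a \<ge> 1" for a :: nat
      proof -
        have "((\<lambda>y. y ^ (j + a) / (real j + a)) has_real_derivative (real (j + a) * y ^ (j + a - Suc 0)) / (real j + a)) (at y within {0..1})"
          by (rule DERIV_cdivide[OF DERIV_pow])
        moreover have "real j + real a \<noteq> 0" using that by simp
        ultimately show ?thesis by simp
      qed
      have d1: "((\<lambda>y. y ^ (j + 1) / (real j + 1)) has_real_derivative y ^ j) (at y within {0..1})"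
        using pw[of 1] by simp
      have d2: "((\<lambda>y. 2 * y ^ (j + 2) / (real j + 2)) has_real_derivative 2 * y ^ (j + 1)) (at y within {0..1})"
        using DERIV_cmult[OF pw[of 2], of 2] by (simp add: times_divide_eq_right)
      have d3: "((\<lambda>y. y ^ (j + 3) / (real j + 3)) has_real_derivative y ^ (j + 2)) (at y within {0..1})"
        using pw[of 3] by simp
      have "(F has_real_derivative y ^ j - 2 * y ^ (j + 1) + y ^ (j + 2)) (at y within {0..1})"
        unfolding F_def by (intro DERIV_add DERIV_diff d1 d2 d3)
      moreover have "y ^ j - 2 * y ^ (j + 1) + y ^ (j + 2) = (1 - y)\<^sup>2 * y ^ j"
        by (simp add: power2_eq_square algebra_simps)
      ultimately show ?thesis by simp
    qed
    then show "(F has_vector_derivative (1 - y)\<^sup>2 * y ^ j) (at y within {0..1})"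
      by (simp add: has_real_derivative_iff_has_vector_derivative)
  qed simp
  moreover have "F 1 - F 0 = 1 / (real j + 1) - 2 / (real j + 2) + 1 / (real j + 3)" by (simp add: F_def)
  ultimately show ?thesis by simp
qed

lemma root_series:
  assumes k: "odd k" "k \<ge> 3" and y: "0 \<le> y" "y < 1"
  shows "(\<lambda>m. (-y) ^ m * (if k dvd (m + 2) then real k else 0)) sums (- (real k * y ^ (k - 2) / (1 + y ^ k)))"
proof -
  define f where "f m = (-y) ^ m * (if k dvd (m + 2) then real k else 0)" for m
  define g where "g t = t * k + (k - 2)" for t
  have sm: "strict_mono g"
  proof (rule strict_monoI)
    fix a b :: nat assume "a < b"
    then have "a * k < b * k" using k by simp
    then show "g a < g b" unfolding g_def using k by linarith
  qed
  have out: "f n = 0" if "n \<notin> range g" for n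
  proof (rule ccontr)
    assume "f n \<noteq> 0"
    then have "k dvd (n + 2)" by (auto simp: f_def split: if_splits)
    then obtain u where u: "n + 2 = k * u" by blast
    then have "u \<ge> 1" by (cases u) auto
    then have "n = g (u - 1)" using u k by (cases u) (auto simp: g_def algebra_simps)
    then show False using that by auto
  qed
  have yk: "norm ((-y) ^ k) < 1"
  proof -
    have "y ^ k < 1 ^ k" using y k by (intro power_strict_mono) auto
    then show ?thesis using y by (simp add: norm_power)
  qed
  have geo: "(\<lambda>t. ((-y) ^ k) ^ t) sums (1 / (1 - (-y) ^ k))" by (rule geometric_sums[OF yk])
  have fg: "f (g t) = real k * (-y) ^ (k - 2) * ((-y) ^ k) ^ t" for t
  proof -
    have "g t + 2 = (t + 1) * k" using k by (simp add: g_def algebra_simps)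
    then have d: "k dvd (g t + 2)" by simp
    have "(-y) ^ g t = ((-y) ^ k) ^ t * (-y) ^ (k - 2)"
      by (simp add: g_def power_add power_mult mult.commute)
    then show ?thesis using d by (simp add: f_def mult_ac)
  qed
  have "(\<lambda>t. f (g t)) sums (real k * (-y) ^ (k - 2) * (1 / (1 - (-y) ^ k)))"
    unfolding fg by (rule sums_mult[OF geo])
  then have "f sums (real k * (-y) ^ (k - 2) * (1 / (1 - (-y) ^ k)))"
    by (subst (asm) sums_mono_reindex[OF sm out]) simp
  moreover have "real k * (-y) ^ (k - 2) * (1 / (1 - (-y) ^ k)) = - (real k * y ^ (k - 2) / (1 + y ^ k))"
  proof -
    have o2: "odd (k - 2)" using k by auto
    have "(-y) ^ (k - 2) = - (y ^ (k - 2))" using o2 by simp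
    moreover have "(-y) ^ k = - (y ^ k)" using k by simp
    ultimately show ?thesis by simp
  qed
  ultimately have "f sums (- (real k * y ^ (k - 2) / (1 + y ^ k)))" by simp
  then show ?thesis unfolding f_def .
qed

definition Pk :: "nat \<Rightarrow> real" where
  "Pk k = 1 / (real (k - 2) + 1) - 2 / (real (k - 2) + 2) + 1 / (real (k - 2) + 3)"

lemma Pk_pos: "Pk k > 0"
proof -
  define j where "j = real (k - 2)"
  have j: "j \<ge> 0" by (simp add: j_def)
  have e1: "1 / (j + 1) - 1 / (j + 2) = 1 / ((j + 1) * (j + 2))" using j by (simp add: diff_frac_eq)
  have e2: "1 / (j + 2) - 1 / (j + 3) = 1 / ((j + 2) * (j + 3))" using j by (simp add: diff_frac_eq)
  have lt: "1 / ((j + 2) * (j + 3)) < 1 / ((j + 1) * (j + 2))"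
    using j by (intro divide_strict_left_mono mult_strict_mono) auto
  have "1 / (j + 1) - 2 / (j + 2) + 1 / (j + 3) > 0" using e1 e2 lt by linarith
  then show ?thesis by (simp add: Pk_def j_def)
qed

lemma root_fam:
  assumes k: "odd k" "k \<ge> 3" and cop: "coprime s k"
  shows "(\<Sum>r<k. flog (1 + cos (real r * (2 * pi * real s / real k)))) \<le> real k * (1 - ln 2) - real k / 2 * Pk k"
proof -
  have k0: "k > 0" using k by simp
  define v where "v r = real r * (2 * pi * real s / real k)" for r
  have C: "(\<Sum>r<k. cos (real l * v r)) = (if k dvd l then real k else 0)" for l
  proof -
    have "(\<Sum>r<k. cos (real l * v r)) = (\<Sum>r<k. cos (real r * (2 * pi * real s * real l / real k)))"
      by (intro sum.cong) (auto simp: v_def algebra_simps)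
    then show ?thesis using cos_sum_root[OF k0 cop, of l] by simp
  qed
  have C1: "(\<Sum>r<k. cos (v r)) = 0"
  proof -
    have "\<not> k dvd 1" using k by auto
    then show ?thesis using C[of 1] by simp
  qed
  define U where "U y = real k - real k / 2 * ((1 - y)\<^sup>2 * y ^ (k - 2))" for y :: real
  have bound: "(\<Sum>r<k. Kf y (v r)) \<le> U y" if y: "y \<in> {0..1}" for y
  proof (cases "y = 1")
    case True
    then show ?thesis using C1 by (simp add: K_at1 sum.distrib U_def)
  next
    case False
    then have y0: "0 \<le> y" "y < 1" using y by auto
    have ser: "(\<lambda>m. (-y) ^ m * (\<Sum>r<k. cos (real (m + 2) * v r))) sums (\<Sum>r<k. Rf y (v r))"
      by (rule fam_series[OF y0])
    then have ser': "(\<lambda>m. (-y) ^ m * (if k dvd (m + 2) then real k else 0)) sums (\<Sum>r<k. Rf y (v r))"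
      unfolding C .
    have R: "(\<Sum>r<k. Rf y (v r)) = - (real k * y ^ (k - 2) / (1 + y ^ k))"
      using sums_unique2[OF ser' root_series[OF k y0]] .
    have a0: "real k * y ^ (k - 2) \<ge> 0" using y0 by simp
    have yk: "y ^ k \<le> 1" using y0 by (simp add: power_le_one)
    have yk0: "y ^ k \<ge> 0" using y0 by simp
    have "real k * y ^ (k - 2) / (1 + y ^ k) \<ge> real k * y ^ (k - 2) / 2"
      using a0 yk yk0 by (intro divide_left_mono) auto
    then have "(1 - y)\<^sup>2 * (\<Sum>r<k. Rf y (v r)) \<le> (1 - y)\<^sup>2 * (- (real k * y ^ (k - 2) / 2))"
      unfolding R by (intro mult_left_mono) auto
    then show ?thesis using fam_K[OF y0, of v "{..<k}"] C1 by (simp add: U_def algebra_simps)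
  qed
  have I1: "((\<lambda>y. \<Sum>r<k. Kf y (v r)) has_integral (\<Sum>r<k. (1 + cos (v r)) * ln 2 + flog (1 + cos (v r)))) {0..1}"
    by (rule fam_int) simp
  have I2: "(U has_integral (real k - real k / 2 * Pk k)) {0..1}"
  proof -
    have c: "((\<lambda>y. real k) has_integral real k) {0..1::real}"
      using has_integral_const_real[of "real k" 0 "1::real"] by simp
    have p: "((\<lambda>y::real. (1 - y)\<^sup>2 * y ^ (k - 2)) has_integral Pk k) {0..1}"
      using poly_int[of "k - 2"] by (simp add: Pk_def)
    have "((\<lambda>y. real k - real k / 2 * ((1 - y)\<^sup>2 * y ^ (k - 2))) has_integral (real k - real k / 2 * Pk k)) {0..1}"
      by (intro has_integral_diff c has_integral_mult_right p)
    then show ?thesis unfolding U_def .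
  qed
  have "(\<Sum>r<k. (1 + cos (v r)) * ln 2 + flog (1 + cos (v r))) \<le> real k - real k / 2 * Pk k"
    by (rule has_integral_le[OF I1 I2]) (use bound in auto)
  moreover have "(\<Sum>r<k. (1 + cos (v r)) * ln 2 + flog (1 + cos (v r))) = real k * ln 2 + (\<Sum>r<k. flog (1 + cos (v r)))"
    using C1 by (simp add: sum.distrib sum_distrib_right[symmetric])
  ultimately show ?thesis by (simp add: v_def algebra_simps)
qed

lemma sum_split_add: fixes a b :: nat shows "(\<Sum>i<a + b. h i) = (\<Sum>i<a. h i) + (\<Sum>i<b. h (a + i))"
  by (induction b) (auto simp: add.commute add.left_commute)

lemma per_shift: fixes q k r :: nat assumes "\<And>i. h (i + k) = h i" shows "h (q * k + r) = h r"
proof (induction q)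
  case 0 then show ?case by simp
next
  case (Suc q)
  have "h (Suc q * k + r) = h ((q * k + r) + k)" by (simp add: algebra_simps)
  also have "\<dots> = h (q * k + r)" by (rule assms)
  finally show ?case using Suc by simp
qed

lemma per_sum:
  fixes q k r :: nat
  assumes "\<And>i. h (i + k) = (h i :: real)"
  shows "(\<Sum>i<q * k + r. h i) = real q * (\<Sum>i<k. h i) + (\<Sum>i<r. h i)"
proof -
  have A: "(\<Sum>i<q * k. h i) = real q * (\<Sum>i<k. h i)"
  proof (induction q)
    case 0 then show ?case by simp
  next
    case (Suc q)
    have "(\<Sum>i<Suc q * k. h i) = (\<Sum>i<q * k + k. h i)" by (simp add: add.commute)
    also have "\<dots> = (\<Sum>i<q * k. h i) + (\<Sum>i<k. h (q * k + i))" by (rule sum_split_add)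
    also have "(\<Sum>i<k. h (q * k + i)) = (\<Sum>i<k. h i)" using per_shift[where h=h and k=k, OF assms] by simp
    finally show ?case using Suc by (simp add: algebra_simps)
  qed
  have "(\<Sum>i<q * k + r. h i) = (\<Sum>i<q * k. h i) + (\<Sum>i<r. h (q * k + i))" by (rule sum_split_add)
  also have "(\<Sum>i<r. h (q * k + i)) = (\<Sum>i<r. h i)" using per_shift[where h=h and k=k, OF assms] by simp
  finally show ?thesis using A by simp
qed

lemma sum_flog_wF: "n > 0 \<Longrightarrow> (\<Sum>i<n. flog (wF \<phi> i)) = (\<Sum>i<n. flog (1 + cos (real i * (2 * \<phi>)))) - flog 2"
proof -
  assume "n > 0"
  then obtain m where m: "n = Suc m" using gr0_implies_Suc by blast
  have "(\<Sum>i<n. flog (wF \<phi> i)) = flog 1 + (\<Sum>i<m. flog (1 + cos (2 * real (Suc i) * \<phi>)))"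
    unfolding m sum.lessThan_Suc_shift by (simp add: wF_def)
  moreover have "(\<Sum>i<n. flog (1 + cos (real i * (2 * \<phi>)))) = flog 2 + (\<Sum>i<m. flog (1 + cos (2 * real (Suc i) * \<phi>)))"
    unfolding m sum.lessThan_Suc_shift by (simp add: algebra_simps)
  ultimately show ?thesis by (simp add: flog_def)
qed

lemma ln2_lt1: "ln (2::real) < 1"
  using ln_2_less_1 by simp

lemma zero_entropy_bound:
  assumes n: "n > 0" and j: "1 \<le> j" "j \<le> n"
  shows "entropy First n (cheb_zero First n j) \<le> ln (real n) - (1 - ln 2) + 2 / real n"
proof -
  define c where "c = 2 * j - 1"
  define \<phi> where "\<phi> = real c * pi / (2 * real n)"
  have oc: "odd c" using j by (simp add: c_def)
  have cz: "cheb_zero First n j = cos \<phi>" by (simp add: \<phi>_def c_def)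
  have nr: "real n > 0" using n by simp
  have phr: "0 < \<phi>" "\<phi> < pi"
  proof -
    have c1: "real c \<ge> 1" "real c < 2 * real n" using j by (auto simp: c_def)
    then have u1: "0 < real c / (2 * real n)" and u2: "real c / (2 * real n) < 1" using nr by auto
    have e: "\<phi> = pi * (real c / (2 * real n))" by (simp add: \<phi>_def)
    show "0 < \<phi>" unfolding e using mult_pos_pos[OF pi_gt_zero u1] .
    show "\<phi> < pi" unfolding e using mult_strict_left_mono[OF u2 pi_gt_zero] by simp
  qed
  have ang: "real i * (2 * \<phi>) = real i * (pi * real c / real n)" for i
    using nr by (simp add: \<phi>_def)
  have W: "(\<Sum>i<n. wF \<phi> i) = real n"
    using sum_wF[OF n, of \<phi>] cos_sum_odd[OF oc n] unfolding ang by simp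
  have T: "(\<Sum>i<n. flog (wF \<phi> i)) \<ge> (real n + 1) * (1 - ln 2) - 2 * ln 2"
    using sum_flog_wF[OF n, of \<phi>] zero_fam[OF n oc] unfolding ang by (simp add: flog_def)
  have "entropy First n (cheb_zero First n j) = ln (real n) - (\<Sum>i<n. flog (wF \<phi> i)) / real n"
    unfolding cz entF[OF phr n] Hw_def W ..
  also have "\<dots> \<le> ln (real n) - ((real n + 1) * (1 - ln 2) - 2 * ln 2) / real n"
    using T nr by (simp add: divide_right_mono)
  also have "\<dots> \<le> ln (real n) - (1 - ln 2) + 2 / real n"
  proof -
    have "((real n + 1) * (1 - ln 2) - 2 * ln 2) / real n = (1 - ln 2) + ((1 - ln 2) - 2 * ln 2) / real n"
      using nr by (simp add: field_simps)
    moreover have "((1 - ln 2) - 2 * ln 2) / real n \<ge> - 2 / real n"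
      using nr ln2_lt1 by (intro divide_right_mono) auto
    ultimately show ?thesis by simp
  qed
  finally show ?thesis .
qed

lemma cos_shift_2pi: "cos (x + real (2 * m) * pi) = cos x"
  by (simp add: cos_add cos_npi sin_npi del: of_nat_mult)

lemma x_side:
  assumes k: "odd k" "k \<ge> 3" and cop: "coprime s k" and th: "\<theta> = pi * real s / real k" and n: "n > 0"
  shows "\<bar>(\<Sum>i<n. wF \<theta> i) - real n\<bar> \<le> real k + 1"
    and "(\<Sum>i<n. flog (wF \<theta> i)) \<le> real n * ((1 - ln 2) - Pk k / 2) + 4 * real k + 2"
proof -
  have k0: "k > 0" using k by simp
  define a0 where "a0 = 2 * pi * real s / real k"
  have ang: "real i * (2 * \<theta>) = real i * a0" for i by (simp add: th a0_def)
  have per: "cos (real (i + k) * a0) = cos (real i * a0)" for i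
  proof -
    have "real (i + k) * a0 = real i * a0 + real (2 * s) * pi" using k0 by (simp add: a0_def field_simps)
    then show ?thesis by (simp only: cos_shift_2pi)
  qed
  define q where "q = n div k"
  define r where "r = n mod k"
  have nqr: "n = q * k + r" by (simp add: q_def r_def)
  have rk: "r < k" using k0 by (simp add: r_def)
  have C0: "(\<Sum>i<k. cos (real i * a0)) = 0"
  proof -
    have "\<not> k dvd 1" using k by auto
    then show ?thesis using cos_sum_root[OF k0 cop, of 1] by (simp add: a0_def)
  qed
  have Csum: "\<bar>\<Sum>i<n. cos (real i * a0)\<bar> \<le> real k"
  proof -
    have "(\<Sum>i<n. cos (real i * a0)) = real q * (\<Sum>i<k. cos (real i * a0)) + (\<Sum>i<r. cos (real i * a0))"
      unfolding nqr by (rule per_sum) (rule per)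
    then have "(\<Sum>i<n. cos (real i * a0)) = (\<Sum>i<r. cos (real i * a0))" using C0 by simp
    also have "\<bar>\<dots>\<bar> \<le> (\<Sum>i<r. \<bar>cos (real i * a0)\<bar>)" by (rule sum_abs)
    also have "\<dots> \<le> (\<Sum>i<r. 1)" by (intro sum_mono) simp
    also have "\<dots> \<le> real k" using rk by simp
    finally show ?thesis .
  qed
  show "\<bar>(\<Sum>i<n. wF \<theta> i) - real n\<bar> \<le> real k + 1"
    using sum_wF[OF n, of \<theta>] Csum unfolding ang by linarith
  define h where "h i = flog (1 + cos (real i * a0))" for i
  have hper: "h (i + k) = h i" for i using per by (simp add: h_def)
  have hb: "\<bar>h i\<bar> \<le> 2" for i
  proof -
    have "-1 \<le> cos (real i * a0)" "cos (real i * a0) \<le> 1" by (rule cos_ge_minus_one, rule cos_le_one)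
    then show ?thesis unfolding h_def by (intro flog_bound) linarith+
  qed
  define T where "T = (\<Sum>i<k. h i)"
  have T: "T \<le> real k * (1 - ln 2) - real k / 2 * Pk k"
    using root_fam[OF k cop] by (simp add: T_def h_def a0_def)
  have Tb: "\<bar>T\<bar> \<le> 2 * real k"
  proof -
    have "\<bar>T\<bar> \<le> (\<Sum>i<k. \<bar>h i\<bar>)" unfolding T_def by (rule sum_abs)
    also have "\<dots> \<le> (\<Sum>i<k. 2)" using hb by (intro sum_mono) auto
    finally show ?thesis by simp
  qed
  have R: "\<bar>\<Sum>i<r. h i\<bar> \<le> 2 * real k"
  proof -
    have "\<bar>\<Sum>i<r. h i\<bar> \<le> (\<Sum>i<r. \<bar>h i\<bar>)" by (rule sum_abs)
    also have "\<dots> \<le> (\<Sum>i<r. 2)" using hb by (intro sum_mono) auto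
    also have "\<dots> \<le> 2 * real k" using rk by simp
    finally show ?thesis .
  qed
  have qb: "real q \<le> real n / real k" "real q \<ge> real n / real k - 1"
  proof -
    have "real q * real k \<le> real n" using nqr by (metis le_add1 of_nat_le_iff of_nat_mult)
    then show "real q \<le> real n / real k" using k0 by (simp add: field_simps)
    have "real n < (real q + 1) * real k" using nqr rk
      by (metis add_less_cancel_left mult.commute mult_Suc_right of_nat_Suc of_nat_less_iff of_nat_mult add.commute)
    then show "real q \<ge> real n / real k - 1" using k0 by (simp add: field_simps)
  qed
  have qT: "real q * T \<le> real n / real k * T + \<bar>T\<bar>"
  proof (cases "T \<ge> 0")
    case True then show ?thesis using qb(1) mult_right_mono by fastforce
  next
    case False
    then have "real q * T \<le> (real n / real k - 1) * T" using qb(2) by (intro mult_right_mono_neg) auto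
    then show ?thesis using False by (simp add: algebra_simps)
  qed
  have nT: "real n / real k * T \<le> real n * ((1 - ln 2) - Pk k / 2)"
  proof -
    have "real n / real k * T \<le> real n / real k * (real k * (1 - ln 2) - real k / 2 * Pk k)"
      using T by (intro mult_left_mono) auto
    also have "\<dots> = real n * ((1 - ln 2) - Pk k / 2)" using k0 by (simp add: field_simps)
    finally show ?thesis .
  qed
  have "(\<Sum>i<n. flog (wF \<theta> i)) = (\<Sum>i<n. h i) - flog 2"
    using sum_flog_wF[OF n, of \<theta>] unfolding ang h_def by simp
  also have "(\<Sum>i<n. h i) = real q * T + (\<Sum>i<r. h i)"
    unfolding nqr T_def by (rule per_sum) (rule hper)
  finally have eq: "(\<Sum>i<n. flog (wF \<theta> i)) = real q * T + (\<Sum>i<r. h i) - flog 2" .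
  have f2: "flog 2 \<ge> 0" by (simp add: flog_def)
  show "(\<Sum>i<n. flog (wF \<theta> i)) \<le> real n * ((1 - ln 2) - Pk k / 2) + 4 * real k + 2"
    unfolding eq using qT nT Tb R f2 by linarith
qed

lemma odd_limsup:
  assumes th: "0 < \<theta>" "\<theta> < pi" and q: "\<theta> / pi = real s / real k" and sk: "s < k" "gcd s k = 1"
    and ok: "odd k"
  shows "\<forall>r j :: nat \<Rightarrow> nat. strict_mono r \<and> (\<forall>m. 1 \<le> j m \<and> j m \<le> r m) \<longrightarrow>
            Limsup sequentially
              (\<lambda>m. ereal (entropy_at_zero First (r m) (j m) - entropy First (r m) (cos \<theta>))) < 0"
proof (intro allI impI)
  fix r j :: "nat \<Rightarrow> nat"
  assume rj: "strict_mono r \<and> (\<forall>m. 1 \<le> j m \<and> j m \<le> r m)"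
  have k0: "k > 0" using sk by simp
  have s0: "s > 0"
  proof (rule ccontr)
    assume "\<not> s > 0" then have "s = 0" by simp
    then show False using q th by simp
  qed
  have "k \<ge> 2" using sk s0 by linarith
  moreover have "k \<noteq> 2" using ok by auto
  ultimately have k3: "k \<ge> 3" by linarith
  have cop: "coprime s k" using sk(2) by (simp add: coprime_iff_gcd_eq_1)
  have thq: "\<theta> = pi * real s / real k" using q by (simp add: field_simps)
  define W where "W n = (\<Sum>i<n. wF \<theta> i)" for n
  define T where "T n = (\<Sum>i<n. flog (wF \<theta> i))" for n
  define a where "a = 1 - ln (2::real)"
  define \<epsilon> where "\<epsilon> = Pk k / 2"
  define C1 where "C1 = 4 * real k + 2"
  have \<epsilon>: "\<epsilon> > 0" using Pk_pos[of k] by (simp add: \<epsilon>_def)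
  have Wb: "\<bar>W n - real n\<bar> \<le> real k + 1" if "n > 0" for n
    using x_side(1)[OF ok k3 cop thq that] by (simp add: W_def)
  have Tb: "T n \<le> real n * (a - \<epsilon>) + C1" if "n > 0" for n
    using x_side(2)[OF ok k3 cop thq that] by (simp add: T_def a_def \<epsilon>_def C1_def)
  define G where "G n = ln (real n / W n) - a + 2 / real n + ((a - \<epsilon>) + C1 / real n) * (real n / W n)" for n
  have key: "entropy_at_zero First n jj - entropy First n (cos \<theta>) \<le> G n"
    if n: "n > k + 1" and jj: "1 \<le> jj" "jj \<le> n" for n jj
  proof -
    have n0: "n > 0" using n by simp
    have nr: "real n > 0" using n0 by simp
    have Wp: "W n > 0" using Wb[OF n0] n by linarith
    have z: "entropy_at_zero First n jj \<le> ln (real n) - a + 2 / real n"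
      using zero_entropy_bound[OF n0 jj] by (simp add: entropy_at_zero_def a_def)
    have x: "entropy First n (cos \<theta>) = ln (W n) - T n / W n"
      using entF[OF th n0] by (simp add: Hw_def W_def T_def)
    have "T n / W n \<le> (real n * (a - \<epsilon>) + C1) / W n" using Tb[OF n0] Wp by (simp add: divide_right_mono)
    also have "\<dots> = ((a - \<epsilon>) + C1 / real n) * (real n / W n)" using nr Wp by (simp add: field_simps)
    finally have t: "T n / W n \<le> ((a - \<epsilon>) + C1 / real n) * (real n / W n)" .
    have l: "ln (real n / W n) = ln (real n) - ln (W n)" using nr Wp by (simp add: ln_div)
    show ?thesis using z x t l unfolding G_def by linarith
  qed
  have ratio: "(\<lambda>n. real n / W n) \<longlonglongrightarrow> 1"
  proof (rule tendsto_sandwich)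
    show "eventually (\<lambda>n. real n / (real n + (real k + 1)) \<le> real n / W n) sequentially"
      using eventually_gt_at_top[of "k + 1"]
    proof eventually_elim
      case (elim n)
      then have "W n > 0" "W n \<le> real n + (real k + 1)" using Wb[of n] by auto
      then show ?case by (intro divide_left_mono) auto
    qed
    show "eventually (\<lambda>n. real n / W n \<le> real n / (real n - (real k + 1))) sequentially"
      using eventually_gt_at_top[of "k + 1"]
    proof eventually_elim
      case (elim n)
      then have "W n \<ge> real n - (real k + 1)" "real n - (real k + 1) > 0" using Wb[of n] by auto
      then show ?case by (intro divide_left_mono) auto
    qed
    show "(\<lambda>n. real n / (real n + (real k + 1))) \<longlonglongrightarrow> 1" by real_asymp
    show "(\<lambda>n. real n / (real n - (real k + 1))) \<longlonglongrightarrow> 1" by real_asymp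
  qed
  have Glim: "G \<longlonglongrightarrow> (ln 1 - a + 0 + ((a - \<epsilon>) + 0) * 1)"
    unfolding G_def
    by (intro tendsto_intros ratio) (simp | real_asymp)+
  then have Glim': "G \<longlonglongrightarrow> - \<epsilon>" by simp
  have evG: "eventually (\<lambda>n. G n < - \<epsilon> / 2 \<and> n > k + 1) sequentially"
    using order_tendstoD(2)[OF Glim', of "- \<epsilon> / 2"] \<epsilon> eventually_gt_at_top[of "k + 1"]
    by (auto elim: eventually_conj)
  have fr: "filterlim r sequentially sequentially" using rj filterlim_subseq by blast
  have "eventually (\<lambda>m. G (r m) < - \<epsilon> / 2 \<and> r m > k + 1) sequentially"
    using fr evG unfolding filterlim_iff by blast
  then have "eventually (\<lambda>m. ereal (entropy_at_zero First (r m) (j m) - entropy First (r m) (cos \<theta>)) \<le> ereal (- \<epsilon> / 2)) sequentially"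
  proof eventually_elim
    case (elim m)
    then have "entropy_at_zero First (r m) (j m) - entropy First (r m) (cos \<theta>) \<le> G (r m)"
      using key[of "r m" "j m"] rj by auto
    then show ?case using elim by simp
  qed
  then have "Limsup sequentially (\<lambda>m. ereal (entropy_at_zero First (r m) (j m) - entropy First (r m) (cos \<theta>))) \<le> ereal (- \<epsilon> / 2)"
    by (rule Limsup_bounded)
  also have "ereal (- \<epsilon> / 2) < 0" using \<epsilon> by simp
  finally show "Limsup sequentially (\<lambda>m. ereal (entropy_at_zero First (r m) (j m) - entropy First (r m) (cos \<theta>))) < 0" .
qed

theorem theorem2:
  fixes \<theta> :: real
  assumes "0 < \<theta>" and "\<theta> < pi"
  shows
   "(\<theta> / pi \<notin> \<rat> \<longrightarrow>
      (\<forall>c. \<exists>nm jm :: nat \<Rightarrow> nat.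
          filterlim nm at_top sequentially \<and>
          (\<forall>m. 1 \<le> jm m \<and> jm m \<le> nm m) \<and>
          ((\<lambda>m. cheb_zero c (nm m) (jm m)) \<longlonglongrightarrow> cos \<theta>) \<and>
          ((\<lambda>m. entropy_at_zero c (nm m) (jm m) - entropy c (nm m) (cos \<theta>)) \<longlonglongrightarrow> 0)))
    \<and>
    (\<forall>s k :: nat. \<theta> / pi = real s / real k \<and> s < k \<and> gcd s k = 1 \<longrightarrow>
      (\<forall>c. (c = Second \<or> even k) \<longrightarrow>
         (\<exists>nm jm :: nat \<Rightarrow> nat.
          filterlim nm at_top sequentially \<and>
          (\<forall>m. 1 \<le> jm m \<and> jm m \<le> nm m) \<and>
          ((\<lambda>m. cheb_zero c (nm m) (jm m)) \<longlonglongrightarrow> cos \<theta>) \<and>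
          ((\<lambda>m. entropy_at_zero c (nm m) (jm m) - entropy c (nm m) (cos \<theta>)) \<longlonglongrightarrow> 0)))
      \<and>
      (odd k \<longrightarrow>
         (\<forall>r j :: nat \<Rightarrow> nat. strict_mono r \<and> (\<forall>m. 1 \<le> j m \<and> j m \<le> r m) \<longrightarrow>
            Limsup sequentially
              (\<lambda>m. ereal (entropy_at_zero First (r m) (j m) - entropy First (r m) (cos \<theta>))) < 0)))"
  proof -
  have A: "\<theta> / pi \<notin> \<rat> \<longrightarrow>
      (\<forall>c. \<exists>nm jm :: nat \<Rightarrow> nat.
          filterlim nm at_top sequentially \<and>
          (\<forall>m. 1 \<le> jm m \<and> jm m \<le> nm m) \<and>
          ((\<lambda>m. cheb_zero c (nm m) (jm m)) \<longlonglongrightarrow> cos \<theta>) \<and>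
          ((\<lambda>m. entropy_at_zero c (nm m) (jm m) - entropy c (nm m) (cos \<theta>)) \<longlonglongrightarrow> 0))"
  proof (intro impI allI)
    fix c assume irr: "\<theta> / pi \<notin> \<rat>"
    show "\<exists>nm jm :: nat \<Rightarrow> nat.
          filterlim nm at_top sequentially \<and>
          (\<forall>m. 1 \<le> jm m \<and> jm m \<le> nm m) \<and>
          ((\<lambda>m. cheb_zero c (nm m) (jm m)) \<longlonglongrightarrow> cos \<theta>) \<and>
          ((\<lambda>m. entropy_at_zero c (nm m) (jm m) - entropy c (nm m) (cos \<theta>)) \<longlonglongrightarrow> 0)"
    proof (cases c)
      case First then show ?thesis using irr_First[OF assms irr] by simp
    next
      case Second then show ?thesis using irr_Second[OF assms irr] by simp
    qed
  qed
  have B: "\<forall>s k :: nat. \<theta> / pi = real s / real k \<and> s < k \<and> gcd s k = 1 \<longrightarrow>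
      (\<forall>c. (c = Second \<or> even k) \<longrightarrow>
         (\<exists>nm jm :: nat \<Rightarrow> nat.
          filterlim nm at_top sequentially \<and>
          (\<forall>m. 1 \<le> jm m \<and> jm m \<le> nm m) \<and>
          ((\<lambda>m. cheb_zero c (nm m) (jm m)) \<longlonglongrightarrow> cos \<theta>) \<and>
          ((\<lambda>m. entropy_at_zero c (nm m) (jm m) - entropy c (nm m) (cos \<theta>)) \<longlonglongrightarrow> 0)))
      \<and>
      (odd k \<longrightarrow>
         (\<forall>r j :: nat \<Rightarrow> nat. strict_mono r \<and> (\<forall>m. 1 \<le> j m \<and> j m \<le> r m) \<longrightarrow>
            Limsup sequentially
              (\<lambda>m. ereal (entropy_at_zero First (r m) (j m) - entropy First (r m) (cos \<theta>))) < 0))"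
  proof (intro allI impI conjI)
    fix s k :: nat and c
    assume h: "\<theta> / pi = real s / real k \<and> s < k \<and> gcd s k = 1" and c: "c = Second \<or> even k"
    show "\<exists>nm jm :: nat \<Rightarrow> nat.
          filterlim nm at_top sequentially \<and>
          (\<forall>m. 1 \<le> jm m \<and> jm m \<le> nm m) \<and>
          ((\<lambda>m. cheb_zero c (nm m) (jm m)) \<longlonglongrightarrow> cos \<theta>) \<and>
          ((\<lambda>m. entropy_at_zero c (nm m) (jm m) - entropy c (nm m) (cos \<theta>)) \<longlonglongrightarrow> 0)"
      using rat_exist[OF assms(1) assms(2) conjunct1[OF h] conjunct1[OF conjunct2[OF h]] conjunct2[OF conjunct2[OF h]] c] .
  next
    fix s k :: nat and r j :: "nat \<Rightarrow> nat"
    assume h: "\<theta> / pi = real s / real k \<and> s < k \<and> gcd s k = 1" and ok: "odd k"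
      and rj: "strict_mono r \<and> (\<forall>m. 1 \<le> j m \<and> j m \<le> r m)"
    show "Limsup sequentially
              (\<lambda>m. ereal (entropy_at_zero First (r m) (j m) - entropy First (r m) (cos \<theta>))) < 0"
      using odd_limsup[OF assms(1) assms(2) conjunct1[OF h] conjunct1[OF conjunct2[OF h]] conjunct2[OF conjunct2[OF h]] ok] rj by blast
  qed
  show ?thesis using A B by blast
qed

end
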